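(* Let $\{\gamma_{tT}\}_{0\le t\le T}$ be a standard gamma bridge with parameter $m>0$ and $X_T>0$ an independent random variable; let $\xi_t=X_T\gamma_{tT}$. Fix $s$ with $0\le s<T$ and define $Z_T=(1-\gamma_{sT})X_T$ and, for $s\le t\le T$, $$\delta_{tT}=\frac{\gamma_{tT}-\gamma_{sT}}{1-\gamma_{sT}}.$$ Then $\xi_t=\xi_s+Z_T\,\delta_{tT}$ for all $s\le t\le T$; the process $\{\delta_{tT}\}_{s\le t\le T}$ is a standard gamma bridge over $[s,T]$ with parameter $m$ (i.e. it has the law of $\{\gamma'_{t-s}/\gamma'_{T-s}\}_{s\le t\le T}$ for a standard gamma process $\gamma'$ with growth rate $m$), and $\{\delta_{tT}\}_{s\le t\le T}$ is independent of $(\xi_s,Z_T)$.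
   Context: A standard gamma process with growth rate $m>0$ on a probability space $(\Omega,\mathcal F,\mathbb Q)$ is a process $\{\gamma_t\}_{t\ge0}$ with $\gamma_0=0$ and independent increments, such that for $0\le s<t$ the increment $\gamma_t-\gamma_s$ has the gamma density $\mathbf 1_{\{x>0\}}x^{m(t-s)-1}e^{-x}/\Gamma[m(t-s)]$. A standard gamma bridge over $[0,T]$ with parameter $m$ is any process with the law of $\{\gamma_t/\gamma_T\}_{0\le t\le T}$ for such a gamma process. *)

theory Defs
  imports "HOL-Probability.Probability"
begin

definition gamma_process :: "'b measure \<Rightarrow> (real \<Rightarrow> 'b \<Rightarrow> real) \<Rightarrow> real \<Rightarrow> bool" where
  "gamma_process N g m \<longleftrightarrow>
     prob_space N \<and>
     (\<forall>t\<ge>0. g t \<in> borel_measurable N) \<and>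
     (\<forall>\<omega>\<in>space N. g 0 \<omega> = 0) \<and>
     (\<forall>(ts :: nat \<Rightarrow> real) n. 0 \<le> ts 0 \<and> (\<forall>i<n. ts i < ts (Suc i)) \<longrightarrow>
        prob_space.indep_vars N (\<lambda>_. borel) (\<lambda>i \<omega>. g (ts (Suc i)) \<omega> - g (ts i) \<omega>) {..<n}) \<and>
     (\<forall>s t. 0 \<le> s \<and> s < t \<longrightarrow>
        distributed N lborel (\<lambda>\<omega>. g t \<omega> - g s \<omega>)
          (\<lambda>x. ennreal (indicator {0<..} x * x powr (m * (t - s) - 1) * exp (- x)
                         / Gamma (m * (t - s)))))"

definition process_law :: "'a measure \<Rightarrow> real set \<Rightarrow> (real \<Rightarrow> 'a \<Rightarrow> real) \<Rightarrow> (real \<Rightarrow> real) measure" where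
  "process_law M I b = distr M (PiM I (\<lambda>_. borel)) (\<lambda>\<omega>. \<lambda>t\<in>I. b t \<omega>)"

definition gamma_bridge :: "'a measure \<Rightarrow> (real \<Rightarrow> 'a \<Rightarrow> real) \<Rightarrow> real \<Rightarrow> real \<Rightarrow> real \<Rightarrow> bool" where
  "gamma_bridge M b s T m \<longleftrightarrow>
     (\<forall>t\<in>{s..T}. b t \<in> borel_measurable M) \<and>
     (\<exists>(N :: (real \<Rightarrow> real) measure) g. gamma_process N g m \<and>
        process_law M {s..T} b = process_law N {s..T} (\<lambda>t \<omega>. g (t - s) \<omega> / g (T - s) \<omega>))"

text \<open>Independence of two random variables with possibly different codomain types
  (the library's indep_var forces equal codomain types); this is literally
  the library's indep_vars_def2 specialised to two variables.\<close>
definition indep_rv :: "'a measure \<Rightarrow> 'b measure \<Rightarrow> ('a \<Rightarrow> 'b) \<Rightarrow> 'c measure \<Rightarrow> ('a \<Rightarrow> 'c) \<Rightarrow> bool" where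
  "indep_rv M Ma A Mb B \<longleftrightarrow>
     A \<in> measurable M Ma \<and> B \<in> measurable M Mb \<and>
     prob_space.indep_set M {A -` S \<inter> space M | S. S \<in> sets Ma} {B -` S \<inter> space M | S. S \<in> sets Mb}"

end

theory Submission
  imports Defs
begin


lemma indep_rv_iff:
  assumes "prob_space M"
  shows "indep_rv M Ma A Mb B \<longleftrightarrow> A \<in> measurable M Ma \<and> B \<in> measurable M Mb \<and>
     distr M Ma A \<Otimes>\<^sub>M distr M Mb B = distr M (Ma \<Otimes>\<^sub>M Mb) (\<lambda>x. (A x, B x))"
proof -
  interpret prob_space M by fact
  show ?thesis
  proof safe
    assume ind: "indep_rv M Ma A Mb B"
    then show rvs: "A \<in> measurable M Ma" "B \<in> measurable M Mb" by (auto simp: indep_rv_def)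
    then have XY: "(\<lambda>x. (A x, B x)) \<in> measurable M (Ma \<Otimes>\<^sub>M Mb)"
      by (rule measurable_Pair)
    interpret X: prob_space "distr M Ma A" by (rule prob_space_distr) fact
    interpret Y: prob_space "distr M Mb B" by (rule prob_space_distr) fact
    interpret XY: pair_prob_space "distr M Ma A" "distr M Mb B" ..
    show "distr M Ma A \<Otimes>\<^sub>M distr M Mb B = distr M (Ma \<Otimes>\<^sub>M Mb) (\<lambda>x. (A x, B x))"
    proof (rule pair_measure_eqI)
      show "sigma_finite_measure (distr M Ma A)" ..
      show "sigma_finite_measure (distr M Mb B)" ..
      fix S T assume S: "S \<in> sets (distr M Ma A)" and T: "T \<in> sets (distr M Mb B)"
      have "emeasure (distr M (Ma \<Otimes>\<^sub>M Mb) (\<lambda>x. (A x, B x))) (S \<times> T)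
          = emeasure M ((\<lambda>x. (A x, B x)) -` (S \<times> T) \<inter> space M)"
        using S T by (intro emeasure_distr[OF XY]) auto
      also have "(\<lambda>x. (A x, B x)) -` (S \<times> T) \<inter> space M = (A -` S \<inter> space M) \<inter> (B -` T \<inter> space M)"
        by auto
      also have "emeasure M \<dots> = emeasure M (A -` S \<inter> space M) * emeasure M (B -` T \<inter> space M)"
      proof -
        have "prob ((A -` S \<inter> space M) \<inter> (B -` T \<inter> space M)) = prob (A -` S \<inter> space M) * prob (B -` T \<inter> space M)"
          by (rule indep_setD[OF ind[unfolded indep_rv_def, THEN conjunct2, THEN conjunct2]]) (use S T in auto)
        then show ?thesis by (simp add: emeasure_eq_measure measure_nonneg ennreal_mult)
      qed
      also have "\<dots> = emeasure (distr M Ma A) S * emeasure (distr M Mb B) T"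
        using rvs S T by (simp add: emeasure_distr)
      finally show "emeasure (distr M Ma A) S * emeasure (distr M Mb B) T = emeasure (distr M (Ma \<Otimes>\<^sub>M Mb) (\<lambda>x. (A x, B x))) (S \<times> T)" by simp
    qed simp
  next
    assume rvs: "A \<in> measurable M Ma" "B \<in> measurable M Mb"
    then have XY: "(\<lambda>x. (A x, B x)) \<in> measurable M (Ma \<Otimes>\<^sub>M Mb)"
      by (rule measurable_Pair)
    interpret X: prob_space "distr M Ma A" by (rule prob_space_distr) fact
    interpret Y: prob_space "distr M Mb B" by (rule prob_space_distr) fact
    interpret XY: pair_prob_space "distr M Ma A" "distr M Mb B" ..
    assume eq: "distr M Ma A \<Otimes>\<^sub>M distr M Mb B = distr M (Ma \<Otimes>\<^sub>M Mb) (\<lambda>x. (A x, B x))"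
    show "indep_rv M Ma A Mb B" unfolding indep_rv_def
    proof (intro conjI rvs)
      show "indep_set {A -` S \<inter> space M |S. S \<in> sets Ma} {B -` S \<inter> space M |S. S \<in> sets Mb}"
      proof (safe intro!: indep_setI)
        { fix S assume "S \<in> sets Ma" then show "A -` S \<inter> space M \<in> sets M"
          using rvs by (auto intro: measurable_sets) }
        { fix S assume "S \<in> sets Mb" then show "B -` S \<inter> space M \<in> sets M"
          using rvs by (auto intro: measurable_sets) }
      next
        fix S T assume ab: "S \<in> sets Ma" "T \<in> sets Mb"
        then have "prob ((A -` S \<inter> space M) \<inter> (B -` T \<inter> space M)) = emeasure (distr M (Ma \<Otimes>\<^sub>M Mb) (\<lambda>x. (A x, B x))) (S \<times> T)"
          using XY by (auto simp add: emeasure_distr emeasure_eq_measure measure_nonneg intro!: arg_cong[where f="prob"])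
        also have "\<dots> = emeasure (distr M Ma A \<Otimes>\<^sub>M distr M Mb B) (S \<times> T)"
          unfolding eq ..
        also have "\<dots> = emeasure (distr M Ma A) S * emeasure (distr M Mb B) T"
          using ab by (simp add: Y.emeasure_pair_measure_Times)
        finally show "prob ((A -` S \<inter> space M) \<inter> (B -` T \<inter> space M)) =
          prob (A -` S \<inter> space M) * prob (B -` T \<inter> space M)"
          using rvs ab by (simp add: emeasure_eq_measure emeasure_distr measure_nonneg ennreal_mult[symmetric])
      qed
    qed
  qed
qed

definition gd :: "real \<Rightarrow> real \<Rightarrow> real" where
  "gd c x = indicator {0<..} x * x powr (c - 1) * exp (- x) / Gamma c"

definition Gam :: "real \<Rightarrow> real measure" where
  "Gam c = density lborel (\<lambda>x. ennreal (gd c x))"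

lemma gd_nonneg: "c > 0 \<Longrightarrow> gd c x \<ge> 0"
  by (auto simp: gd_def indicator_def intro!: divide_nonneg_pos Gamma_real_pos)

lemma gd_measurable[measurable]: "gd c \<in> borel_measurable borel"
  unfolding gd_def by measurable

lemma space_Gam[simp]: "space (Gam c) = UNIV" and sets_Gam[simp, measurable_cong]: "sets (Gam c) = sets borel"
  by (auto simp: Gam_def)

lemma prob_space_Gam: assumes "c > 0" shows "prob_space (Gam c)"
proof
  have "Gamma c = (\<integral>\<^sup>+ t. ennreal (indicator {0..} t * t powr (c - 1) / exp t) \<partial>lborel)"
    by (rule Gamma_conv_nn_integral_real[OF assms])
  also have "\<dots> = (\<integral>\<^sup>+ t. ennreal (Gamma c) * ennreal (gd c t) \<partial>lborel)"
    using Gamma_real_pos[OF assms]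
    by (intro nn_integral_cong) (auto simp: gd_def indicator_def ennreal_mult'[symmetric] exp_minus field_simps)
  also have "\<dots> = ennreal (Gamma c) * (\<integral>\<^sup>+ t. ennreal (gd c t) \<partial>lborel)"
    by (rule nn_integral_cmult) measurable
  finally have "(\<integral>\<^sup>+ t. ennreal (gd c t) \<partial>lborel) = 1"
    using Gamma_real_pos[OF assms]
    using ennreal_mult_cancel_left[of "ennreal (Gamma c)" "\<integral>\<^sup>+ t. ennreal (gd c t) \<partial>lborel" 1] by auto
  then show "emeasure (Gam c) (space (Gam c)) = 1"
    by (simp add: Gam_def emeasure_density)
qed

lemma distr_lborel_borel: "distr M lborel f = distr M borel f"
  by (simp add: distr_def)

lemma distributed_Gam:
  assumes "distributed N lborel Y (\<lambda>x. ennreal (gd c x))"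
  shows "distr N borel Y = Gam c"
  using distributed_distr_eq_density[OF assms] by (simp add: distr_lborel_borel Gam_def)



definition bd :: "real \<Rightarrow> real \<Rightarrow> real \<Rightarrow> real" where
  "bd a b x = indicator {0<..<1} x * x powr (a - 1) * (1 - x) powr (b - 1) * Gamma (a + b) / (Gamma a * Gamma b)"

lemma bd_measurable[measurable]: "bd a b \<in> borel_measurable borel"
  unfolding bd_def by measurable

lemma bd_nonneg: "a > 0 \<Longrightarrow> b > 0 \<Longrightarrow> bd a b x \<ge> 0"
  by (auto simp: bd_def indicator_def intro!: divide_nonneg_pos mult_nonneg_nonneg mult_pos_pos Gamma_real_pos less_imp_le)

lemma pointwise_key:
  assumes a: "a > 0" and b: "b > 0" and u: "u > 0"
  shows "u * (gd a (u * x) * gd b (u - u * x)) = bd a b x * gd (a + b) u"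
proof (cases "0 < x \<and> x < 1")
  case True
  have ux: "u * x > 0" "u - u * x > 0" using True u by (auto simp: algebra_simps)
  have e: "exp (- (u * x)) * exp (- (u - u * x)) = exp (- u)"
    by (simp add: exp_add[symmetric])
  have p1: "(u * x) powr (a - 1) = u powr (a - 1) * x powr (a - 1)"
    using u True by (simp add: powr_mult)
  have p2: "(u - u * x) powr (b - 1) = u powr (b - 1) * (1 - x) powr (b - 1)"
    using u True by (simp add: powr_mult[symmetric] algebra_simps)
  have p3: "u * (u powr (a - 1) * u powr (b - 1)) = u powr (a + b - 1)"
  proof -
    have "u powr 1 * (u powr (a - 1) * u powr (b - 1)) = u powr (1 + ((a - 1) + (b - 1)))"
      by (simp only: powr_add)
    also have "1 + ((a - 1) + (b - 1)) = a + b - 1" by simp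
    finally show ?thesis using u by simp
  qed
  have Gp: "Gamma a > 0" "Gamma b > 0" "Gamma (a + b) > 0" using a b by (auto intro!: Gamma_real_pos)
  show ?thesis
    using ux True u Gp unfolding gd_def bd_def
    apply (simp add: indicator_def p1 p2)
    apply (subst p3[symmetric])
    apply (simp add: field_simps e[symmetric])
    done
next
  case False
  then have "x \<le> 0 \<or> x \<ge> 1" by auto
  then have "u * x \<le> 0 \<or> u - u * x \<le> 0" using u
    by (auto simp: mult_nonneg_nonpos algebra_simps mult_le_cancel_left1)
  then show ?thesis using False unfolding gd_def bd_def by (auto simp: indicator_def)
qed

lemma key_integral:
  fixes h :: "real \<Rightarrow> real \<Rightarrow> ennreal"
  assumes a: "a > 0" and b: "b > 0" and h[measurable]: "case_prod h \<in> borel_measurable (borel \<Otimes>\<^sub>M borel)"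
  shows "(\<integral>\<^sup>+t. \<integral>\<^sup>+u. ennreal (gd a t * gd b u) * h (t / (t + u)) (t + u) \<partial>lborel \<partial>lborel)
       = (\<integral>\<^sup>+u. ennreal (gd (a + b) u) * (\<integral>\<^sup>+x. ennreal (bd a b x) * h x u \<partial>lborel) \<partial>lborel)"
proof -
  have hm[measurable]: "(\<lambda>p. h (f p) (g p)) \<in> borel_measurable M"
    if [measurable]: "f \<in> borel_measurable M" "g \<in> borel_measurable M" for f g and M :: "'z measure"
  proof -
    have "(\<lambda>p. (f p, g p)) \<in> measurable M (borel \<Otimes>\<^sub>M borel)" by measurable
    from measurable_compose[OF this h] show ?thesis by simp
  qed
  have "(\<integral>\<^sup>+t. \<integral>\<^sup>+u. ennreal (gd a t * gd b u) * h (t / (t + u)) (t + u) \<partial>lborel \<partial>lborel)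
      = (\<integral>\<^sup>+t. \<integral>\<^sup>+u. ennreal (gd a t * gd b (u - t)) * h (t / u) u \<partial>lborel \<partial>lborel)"
  proof (rule nn_integral_cong)
    fix t :: real
    have "(\<integral>\<^sup>+u. ennreal (gd a t * gd b u) * h (t / (t + u)) (t + u) \<partial>lborel)
        = (\<integral>\<^sup>+u. ennreal (gd a t * gd b u) * h (t / (t + u)) (t + u) \<partial>distr lborel borel ((+) (-t)))"
      by (simp add: lborel_distr_plus)
    also have "\<dots> = (\<integral>\<^sup>+u. ennreal (gd a t * gd b (u - t)) * h (t / u) u \<partial>lborel)"
      by (subst nn_integral_distr) auto
    finally show "(\<integral>\<^sup>+u. ennreal (gd a t * gd b u) * h (t / (t + u)) (t + u) \<partial>lborel)
        = (\<integral>\<^sup>+u. ennreal (gd a t * gd b (u - t)) * h (t / u) u \<partial>lborel)" .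
  qed
  also have "\<dots> = (\<integral>\<^sup>+u. \<integral>\<^sup>+t. ennreal (gd a t * gd b (u - t)) * h (t / u) u \<partial>lborel \<partial>lborel)"
    by (subst lborel_pair.Fubini') (auto simp: case_prod_unfold)
  also have "\<dots> = (\<integral>\<^sup>+u. ennreal (gd (a + b) u) * (\<integral>\<^sup>+x. ennreal (bd a b x) * h x u \<partial>lborel) \<partial>lborel)"
  proof (rule nn_integral_cong)
    fix u :: real
    show "(\<integral>\<^sup>+t. ennreal (gd a t * gd b (u - t)) * h (t / u) u \<partial>lborel)
        = ennreal (gd (a + b) u) * (\<integral>\<^sup>+x. ennreal (bd a b x) * h x u \<partial>lborel)"
    proof (cases "u > 0")
      case False
      have "gd a t * gd b (u - t) = 0" for t
        using False by (auto simp: gd_def indicator_def)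
      then have z: "(\<lambda>t. ennreal (gd a t * gd b (u - t)) * h (t / u) u) = (\<lambda>t. 0)"
        by (intro ext) (simp only: ennreal_0 mult_zero_left)
      moreover have "gd (a + b) u = 0" using False by (auto simp: gd_def indicator_def)
      ultimately show ?thesis by (simp only: z) simp
    next
      case True
      have "(\<integral>\<^sup>+t. ennreal (gd a t * gd b (u - t)) * h (t / u) u \<partial>lborel)
          = ennreal \<bar>u\<bar> * (\<integral>\<^sup>+x. ennreal (gd a (0 + u * x) * gd b (u - (0 + u * x))) * h ((0 + u * x) / u) u \<partial>lborel)"
        using True by (intro nn_integral_real_affine) auto
      also have "\<dots> = (\<integral>\<^sup>+x. ennreal u * (ennreal (gd a (u * x) * gd b (u - u * x)) * h x u) \<partial>lborel)"
        using True by (subst nn_integral_cmult) auto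
      also have "\<dots> = (\<integral>\<^sup>+x. ennreal (gd (a + b) u) * (ennreal (bd a b x) * h x u) \<partial>lborel)"
      proof (rule nn_integral_cong)
        fix x
        have "ennreal u * (ennreal (gd a (u * x) * gd b (u - u * x)) * h x u)
            = ennreal (u * (gd a (u * x) * gd b (u - u * x))) * h x u"
          using True a b by (simp add: ennreal_mult' mult.assoc gd_nonneg)
        also have "\<dots> = ennreal (bd a b x * gd (a + b) u) * h x u"
          by (simp add: pointwise_key[OF a b True])
        also have "\<dots> = ennreal (gd (a + b) u) * (ennreal (bd a b x) * h x u)"
          using a b by (simp add: ennreal_mult' gd_nonneg bd_nonneg mult_ac)
        finally show "ennreal u * (ennreal (gd a (u * x) * gd b (u - u * x)) * h x u)
            = ennreal (gd (a + b) u) * (ennreal (bd a b x) * h x u)" .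
      qed
      also have "\<dots> = ennreal (gd (a + b) u) * (\<integral>\<^sup>+x. ennreal (bd a b x) * h x u \<partial>lborel)"
        by (subst nn_integral_cmult) auto
      finally show ?thesis .
    qed
  qed
  finally show ?thesis .
qed

definition Bt :: "real \<Rightarrow> real \<Rightarrow> real measure" where
  "Bt a b = density lborel (\<lambda>x. ennreal (bd a b x))"

lemma space_Bt[simp]: "space (Bt a b) = UNIV" and sets_Bt[simp, measurable_cong]: "sets (Bt a b) = sets borel"
  by (auto simp: Bt_def)

lemma emeasure_pair_Gam:
  assumes a: "a > 0" and b: "b > 0" and X[measurable]: "X \<in> sets (borel \<Otimes>\<^sub>M borel)"
  shows "emeasure (Gam a \<Otimes>\<^sub>M Gam b) X = (\<integral>\<^sup>+t. \<integral>\<^sup>+u. ennreal (gd a t * gd b u) * indicator X (t, u) \<partial>lborel \<partial>lborel)"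
proof -
  interpret Gb: prob_space "Gam b" by (rule prob_space_Gam[OF b])
  have X': "X \<in> sets (Gam a \<Otimes>\<^sub>M Gam b)" by simp
  have "emeasure (Gam a \<Otimes>\<^sub>M Gam b) X = (\<integral>\<^sup>+t. emeasure (Gam b) (Pair t -` X) \<partial>Gam a)"
    by (rule Gb.emeasure_pair_measure_alt[OF X'])
  also have "\<dots> = (\<integral>\<^sup>+t. \<integral>\<^sup>+u. indicator X (t, u) \<partial>Gam b \<partial>Gam a)"
  proof (intro nn_integral_cong)
    fix t
    have "Pair t -` X \<in> sets (Gam b)" by simp
    then have "emeasure (Gam b) (Pair t -` X) = (\<integral>\<^sup>+u. indicator (Pair t -` X) u \<partial>Gam b)"
      by simp
    also have "\<dots> = (\<integral>\<^sup>+u. indicator X (t, u) \<partial>Gam b)"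
      by (intro nn_integral_cong) (simp add: indicator_def)
    finally show "emeasure (Gam b) (Pair t -` X) = (\<integral>\<^sup>+u. indicator X (t, u) \<partial>Gam b)" .
  qed
  also have "\<dots> = (\<integral>\<^sup>+t. ennreal (gd a t) * \<integral>\<^sup>+u. ennreal (gd b u) * indicator X (t, u) \<partial>lborel \<partial>lborel)"
    unfolding Gam_def by (subst nn_integral_density; simp add: nn_integral_density)+
  also have "\<dots> = (\<integral>\<^sup>+t. \<integral>\<^sup>+u. ennreal (gd a t * gd b u) * indicator X (t, u) \<partial>lborel \<partial>lborel)"
    using a b by (intro nn_integral_cong) (simp add: nn_integral_cmult[symmetric] ennreal_mult' gd_nonneg mult.assoc)
  finally show ?thesis .
qed

lemma lukacs2:
  assumes a: "a > 0" and b: "b > 0"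
  shows "distr (Gam a \<Otimes>\<^sub>M Gam b) (borel \<Otimes>\<^sub>M borel) (\<lambda>p. (fst p / (fst p + snd p), fst p + snd p))
       = Bt a b \<Otimes>\<^sub>M Gam (a + b)"
    and "prob_space (Bt a b)"
proof -
  let ?F = "\<lambda>p::real\<times>real. (fst p / (fst p + snd p), fst p + snd p)"
  have Fm[measurable]: "?F \<in> measurable (Gam a \<Otimes>\<^sub>M Gam b) (borel \<Otimes>\<^sub>M borel)"
    by (simp add: measurable_cong_sets[OF sets_pair_measure_cong[OF sets_Gam sets_Gam] refl])
  have ab: "a + b > 0" using a b by simp
  interpret Gab: prob_space "Gam (a + b)" by (rule prob_space_Gam[OF ab])
  have main: "emeasure (distr (Gam a \<Otimes>\<^sub>M Gam b) (borel \<Otimes>\<^sub>M borel) ?F) (A \<times> B)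
        = (\<integral>\<^sup>+x. ennreal (bd a b x) * indicator A x \<partial>lborel) * (\<integral>\<^sup>+u. ennreal (gd (a + b) u) * indicator B u \<partial>lborel)"
    if A[measurable]: "A \<in> sets borel" and B[measurable]: "B \<in> sets borel" for A B
  proof -
    have "emeasure (distr (Gam a \<Otimes>\<^sub>M Gam b) (borel \<Otimes>\<^sub>M borel) ?F) (A \<times> B)
        = emeasure (Gam a \<Otimes>\<^sub>M Gam b) (?F -` (A \<times> B) \<inter> space (Gam a \<Otimes>\<^sub>M Gam b))"
      by (rule emeasure_distr[OF Fm]) simp
    also have "?F -` (A \<times> B) \<inter> space (Gam a \<Otimes>\<^sub>M Gam b) = ?F -` (A \<times> B)"
      by (simp add: space_pair_measure)
    also have "emeasure (Gam a \<Otimes>\<^sub>M Gam b) (?F -` (A \<times> B))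
       = (\<integral>\<^sup>+t. \<integral>\<^sup>+u. ennreal (gd a t * gd b u) * indicator (?F -` (A \<times> B)) (t, u) \<partial>lborel \<partial>lborel)"
    proof (rule emeasure_pair_Gam[OF a b])
      have "?F \<in> measurable (borel \<Otimes>\<^sub>M borel) (borel \<Otimes>\<^sub>M borel)" by measurable
      from measurable_sets[OF this, of "A \<times> B"] show "?F -` (A \<times> B) \<in> sets (borel \<Otimes>\<^sub>M borel)"
        by (simp add: space_pair_measure)
    qed
    also have "\<dots> = (\<integral>\<^sup>+t. \<integral>\<^sup>+u. ennreal (gd a t * gd b u) * (\<lambda>x w. indicator A x * indicator B w) (t / (t + u)) (t + u) \<partial>lborel \<partial>lborel)"
      by (intro nn_integral_cong) (simp add: indicator_def)
    also have "\<dots> = (\<integral>\<^sup>+u. ennreal (gd (a + b) u) * (\<integral>\<^sup>+x. ennreal (bd a b x) * (\<lambda>x w. indicator A x * indicator B w) x u \<partial>lborel) \<partial>lborel)"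
      by (rule key_integral[OF a b]) measurable
    also have "\<dots> = (\<integral>\<^sup>+u. (ennreal (gd (a + b) u) * indicator B u) * (\<integral>\<^sup>+x. ennreal (bd a b x) * indicator A x \<partial>lborel) \<partial>lborel)"
    proof (intro nn_integral_cong)
      fix u
      have "(\<integral>\<^sup>+x. ennreal (bd a b x) * (indicator A x * indicator B u) \<partial>lborel)
           = indicator B u * (\<integral>\<^sup>+x. ennreal (bd a b x) * indicator A x \<partial>lborel)"
        by (subst nn_integral_cmult[symmetric]) (auto intro!: nn_integral_cong simp: mult_ac)
      then show "ennreal (gd (a + b) u) * (\<integral>\<^sup>+x. ennreal (bd a b x) * (\<lambda>x w. indicator A x * indicator B w) x u \<partial>lborel)
           = (ennreal (gd (a + b) u) * indicator B u) * (\<integral>\<^sup>+x. ennreal (bd a b x) * indicator A x \<partial>lborel)"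
        by (simp add: mult_ac)
    qed
    also have "\<dots> = (\<integral>\<^sup>+x. ennreal (bd a b x) * indicator A x \<partial>lborel) * (\<integral>\<^sup>+u. ennreal (gd (a + b) u) * indicator B u \<partial>lborel)"
      by (subst nn_integral_multc) (auto simp: mult_ac)
    finally show ?thesis .
  qed
  have eBt: "emeasure (Bt a b) A = (\<integral>\<^sup>+x. ennreal (bd a b x) * indicator A x \<partial>lborel)" if "A \<in> sets borel" for A
    using that by (simp add: Bt_def emeasure_density)
  have eG: "emeasure (Gam (a + b)) B = (\<integral>\<^sup>+u. ennreal (gd (a + b) u) * indicator B u \<partial>lborel)" if "B \<in> sets borel" for B
    using that by (simp add: Gam_def emeasure_density)
  have "emeasure (Bt a b) UNIV = emeasure (distr (Gam a \<Otimes>\<^sub>M Gam b) (borel \<Otimes>\<^sub>M borel) ?F) (UNIV \<times> UNIV)"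
    using main[of UNIV UNIV] eBt[of UNIV] eG[of UNIV] Gab.emeasure_space_1 by simp
  also have "\<dots> = 1"
  proof -
    interpret Ga: prob_space "Gam a" by (rule prob_space_Gam[OF a])
    interpret Gb: prob_space "Gam b" by (rule prob_space_Gam[OF b])
    interpret G2: pair_prob_space "Gam a" "Gam b" ..
    interpret D: prob_space "distr (Gam a \<Otimes>\<^sub>M Gam b) (borel \<Otimes>\<^sub>M borel) ?F"
      by (rule G2.prob_space_distr[OF Fm])
    show ?thesis using D.emeasure_space_1 by (simp add: space_pair_measure)
  qed
  finally have PB: "prob_space (Bt a b)" by (intro prob_spaceI) simp
  then show "prob_space (Bt a b)" .
  interpret PB: prob_space "Bt a b" by (rule PB)
  show "distr (Gam a \<Otimes>\<^sub>M Gam b) (borel \<Otimes>\<^sub>M borel) ?F = Bt a b \<Otimes>\<^sub>M Gam (a + b)"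
  proof (rule pair_measure_eqI[symmetric])
    show "sigma_finite_measure (Bt a b)" by unfold_locales
    show "sigma_finite_measure (Gam (a + b))" by unfold_locales
    show "sets (Bt a b \<Otimes>\<^sub>M Gam (a + b)) = sets (distr (Gam a \<Otimes>\<^sub>M Gam b) (borel \<Otimes>\<^sub>M borel) ?F)"
      by (simp add: sets_pair_measure_cong[OF sets_Bt sets_Gam])
    fix A B assume "A \<in> sets (Bt a b)" "B \<in> sets (Gam (a + b))"
    then show "emeasure (Bt a b) A * emeasure (Gam (a + b)) B = emeasure (distr (Gam a \<Otimes>\<^sub>M Gam b) (borel \<Otimes>\<^sub>M borel) ?F) (A \<times> B)"
      using main eBt eG by simp
  qed
qed



lemma pair_assoc:
  assumes "prob_space M1" "prob_space M2" "prob_space M3"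
  shows "(M1 \<Otimes>\<^sub>M M2) \<Otimes>\<^sub>M M3 = distr (M1 \<Otimes>\<^sub>M (M2 \<Otimes>\<^sub>M M3)) ((M1 \<Otimes>\<^sub>M M2) \<Otimes>\<^sub>M M3) (\<lambda>(x, (y, z)). ((x, y), z))"
proof -
  interpret P1: prob_space M1 by fact
  interpret P2: prob_space M2 by fact
  interpret P3: prob_space M3 by fact
  interpret P12: pair_prob_space M1 M2 ..
  interpret P23: pair_prob_space M2 M3 ..
  interpret P12_3: pair_prob_space "M1 \<Otimes>\<^sub>M M2" M3 ..
  interpret P1_23: pair_prob_space M1 "M2 \<Otimes>\<^sub>M M3" ..
  let ?f = "\<lambda>(x, (y, z)). ((x, y), z)"
  have fm[measurable]: "?f \<in> measurable (M1 \<Otimes>\<^sub>M (M2 \<Otimes>\<^sub>M M3)) ((M1 \<Otimes>\<^sub>M M2) \<Otimes>\<^sub>M M3)"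
    by (simp add: case_prod_unfold)
  show ?thesis
  proof (rule pair_measure_eqI)
    show "sigma_finite_measure (M1 \<Otimes>\<^sub>M M2)" by unfold_locales
    show "sigma_finite_measure M3" by unfold_locales
    show "sets ((M1 \<Otimes>\<^sub>M M2) \<Otimes>\<^sub>M M3) = sets (distr (M1 \<Otimes>\<^sub>M (M2 \<Otimes>\<^sub>M M3)) ((M1 \<Otimes>\<^sub>M M2) \<Otimes>\<^sub>M M3) ?f)"
      by simp
    fix A C assume A: "A \<in> sets (M1 \<Otimes>\<^sub>M M2)" and C: "C \<in> sets M3"
    have AC: "A \<times> C \<in> sets ((M1 \<Otimes>\<^sub>M M2) \<Otimes>\<^sub>M M3)" using A C by simp
    have pre: "?f -` (A \<times> C) \<inter> space (M1 \<Otimes>\<^sub>M (M2 \<Otimes>\<^sub>M M3)) \<in> sets (M1 \<Otimes>\<^sub>M (M2 \<Otimes>\<^sub>M M3))"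
      using measurable_sets[OF fm AC] .
    have "emeasure (distr (M1 \<Otimes>\<^sub>M (M2 \<Otimes>\<^sub>M M3)) ((M1 \<Otimes>\<^sub>M M2) \<Otimes>\<^sub>M M3) ?f) (A \<times> C)
        = emeasure (M1 \<Otimes>\<^sub>M (M2 \<Otimes>\<^sub>M M3)) (?f -` (A \<times> C) \<inter> space (M1 \<Otimes>\<^sub>M (M2 \<Otimes>\<^sub>M M3)))"
      by (rule emeasure_distr[OF fm AC])
    also have "\<dots> = (\<integral>\<^sup>+x. emeasure (M2 \<Otimes>\<^sub>M M3) (Pair x -` (?f -` (A \<times> C) \<inter> space (M1 \<Otimes>\<^sub>M (M2 \<Otimes>\<^sub>M M3)))) \<partial>M1)"
      by (rule P23.emeasure_pair_measure_alt[OF pre])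
    also have "\<dots> = (\<integral>\<^sup>+x. emeasure M2 (Pair x -` A) * emeasure M3 C \<partial>M1)"
    proof (rule nn_integral_cong)
      fix x assume x: "x \<in> space M1"
      have "Pair x -` (?f -` (A \<times> C) \<inter> space (M1 \<Otimes>\<^sub>M (M2 \<Otimes>\<^sub>M M3))) = (Pair x -` A) \<times> C"
        using x sets.sets_into_space[OF A] sets.sets_into_space[OF C]
        unfolding space_pair_measure by (auto 0 0 simp del: mem_Times_iff) (auto dest!: subsetD)
      moreover have "Pair x -` A \<in> sets M2" using A by (rule sets_Pair1)
      ultimately show "emeasure (M2 \<Otimes>\<^sub>M M3) (Pair x -` (?f -` (A \<times> C) \<inter> space (M1 \<Otimes>\<^sub>M (M2 \<Otimes>\<^sub>M M3)))) = emeasure M2 (Pair x -` A) * emeasure M3 C"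
        using C by (simp add: P3.emeasure_pair_measure_Times)
    qed
    also have "\<dots> = (\<integral>\<^sup>+x. emeasure M2 (Pair x -` A) \<partial>M1) * emeasure M3 C"
      by (rule nn_integral_multc) (rule P2.measurable_emeasure_Pair[OF A])
    also have "\<dots> = emeasure (M1 \<Otimes>\<^sub>M M2) A * emeasure M3 C"
      by (simp add: P2.emeasure_pair_measure_alt[OF A])
    finally show "emeasure (M1 \<Otimes>\<^sub>M M2) A * emeasure M3 C = emeasure (distr (M1 \<Otimes>\<^sub>M (M2 \<Otimes>\<^sub>M M3)) ((M1 \<Otimes>\<^sub>M M2) \<Otimes>\<^sub>M M3) ?f) (A \<times> C)" ..
  qed
qed

lemma pair_assoc':
  assumes "prob_space M1" "prob_space M2" "prob_space M3"
  shows "M1 \<Otimes>\<^sub>M (M2 \<Otimes>\<^sub>M M3) = distr ((M1 \<Otimes>\<^sub>M M2) \<Otimes>\<^sub>M M3) (M1 \<Otimes>\<^sub>M (M2 \<Otimes>\<^sub>M M3)) (\<lambda>((x, y), z). (x, (y, z)))"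
proof -
  let ?f = "\<lambda>(x, (y, z)). ((x, y), z)" and ?g = "\<lambda>((x, y), z). (x, (y, z))"
  have "distr ((M1 \<Otimes>\<^sub>M M2) \<Otimes>\<^sub>M M3) (M1 \<Otimes>\<^sub>M (M2 \<Otimes>\<^sub>M M3)) ?g
      = distr (distr (M1 \<Otimes>\<^sub>M (M2 \<Otimes>\<^sub>M M3)) ((M1 \<Otimes>\<^sub>M M2) \<Otimes>\<^sub>M M3) ?f) (M1 \<Otimes>\<^sub>M (M2 \<Otimes>\<^sub>M M3)) ?g"
    by (rule arg_cong[where f="\<lambda>N. distr N (M1 \<Otimes>\<^sub>M (M2 \<Otimes>\<^sub>M M3)) ?g"]) (rule pair_assoc[OF assms])
  also have "\<dots> = distr (M1 \<Otimes>\<^sub>M (M2 \<Otimes>\<^sub>M M3)) (M1 \<Otimes>\<^sub>M (M2 \<Otimes>\<^sub>M M3)) (?g \<circ> ?f)"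
    by (rule distr_distr) (simp_all add: case_prod_unfold)
  also have "?g \<circ> ?f = (\<lambda>x. x)" by (simp add: fun_eq_iff case_prod_unfold)
  finally show ?thesis by simp
qed



definition Sg :: "nat \<Rightarrow> (nat \<Rightarrow> real) \<Rightarrow> real" where
  "Sg n y = (\<Sum>i<n. y i)"

definition Qv :: "nat \<Rightarrow> (nat \<Rightarrow> real) \<Rightarrow> (nat \<Rightarrow> real)" where
  "Qv n y = (\<lambda>j\<in>{..<n}. y j / Sg n y)"

abbreviation PB :: "nat \<Rightarrow> (nat \<Rightarrow> real) measure" where
  "PB n \<equiv> PiM {..<n} (\<lambda>_. borel)"

abbreviation mu :: "(nat \<Rightarrow> real) \<Rightarrow> nat \<Rightarrow> (nat \<Rightarrow> real) measure" where
  "mu a n \<equiv> PiM {..<n} (\<lambda>i. Gam (a i))"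

lemma sets_mu: "sets (mu a n) = sets (PB n)"
  by (intro sets_PiM_cong) auto

lemma Sg_meas[measurable]: "Sg n \<in> borel_measurable (PB n)"
  unfolding Sg_def by measurable

lemma Qv_meas[measurable]: "Qv n \<in> measurable (PB n) (PB n)"
  unfolding Qv_def by measurable

lemma return_pair:
  assumes "prob_space M" "c \<in> space N1" "f \<in> measurable M N2"
  shows "distr M (N1 \<Otimes>\<^sub>M N2) (\<lambda>x. (c, f x)) = return N1 c \<Otimes>\<^sub>M distr M N2 f"
proof -
  interpret M: prob_space M by fact
  interpret R: prob_space "return N1 c" by (rule prob_space_return) fact
  interpret D: prob_space "distr M N2 f" by (rule M.prob_space_distr) fact
  show ?thesis
  proof (rule pair_measure_eqI[symmetric])
    show "sigma_finite_measure (return N1 c)" by unfold_locales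
    show "sigma_finite_measure (distr M N2 f)" by unfold_locales
    show "sets (return N1 c \<Otimes>\<^sub>M distr M N2 f) = sets (distr M (N1 \<Otimes>\<^sub>M N2) (\<lambda>x. (c, f x)))"
      by simp
    fix A B assume A: "A \<in> sets (return N1 c)" and B: "B \<in> sets (distr M N2 f)"
    have m: "(\<lambda>x. (c, f x)) \<in> measurable M (N1 \<Otimes>\<^sub>M N2)"
      using assms by (intro measurable_Pair) auto
    have "emeasure (distr M (N1 \<Otimes>\<^sub>M N2) (\<lambda>x. (c, f x))) (A \<times> B)
        = emeasure M ((\<lambda>x. (c, f x)) -` (A \<times> B) \<inter> space M)"
      using A B by (intro emeasure_distr[OF m]) auto
    also have "(\<lambda>x. (c, f x)) -` (A \<times> B) \<inter> space M = (if c \<in> A then f -` B \<inter> space M else {})"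
      by auto
    also have "emeasure M \<dots> = indicator A c * emeasure M (f -` B \<inter> space M)"
      by (auto simp: indicator_def)
    also have "\<dots> = emeasure (return N1 c) A * emeasure (distr M N2 f) B"
      using A B assms by (simp add: emeasure_distr)
    finally show "emeasure (return N1 c) A * emeasure (distr M N2 f) B = emeasure (distr M (N1 \<Otimes>\<^sub>M N2) (\<lambda>x. (c, f x))) (A \<times> B)" ..
  qed
qed

lemma AE_Gam_pos: "AE x in Gam c. x > 0"
  unfolding Gam_def by (subst AE_density) (auto simp: gd_def indicator_def)

lemma AE_mu_pos:
  assumes "\<forall>i. a i > 0"
  shows "AE y in mu a n. \<forall>i\<in>{..<n}. y i > 0"
proof (rule AE_finite_allI)
  fix i assume "i \<in> {..<n}"
  then show "AE y in mu a n. y i > 0"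
    using assms by (intro AE_PiM_component prob_space_Gam AE_Gam_pos) auto
qed simp

lemma distr_Gam_borel: "distr (Gam c) borel (\<lambda>x. x) = Gam c"
proof -
  have "distr (Gam c) borel (\<lambda>x. x) = distr (Gam c) (Gam c) (\<lambda>x. x)"
    by (rule distr_cong) auto
  then show ?thesis by simp
qed

lemma psf_Gam: "\<forall>i. a i > 0 \<Longrightarrow> product_sigma_finite (\<lambda>i. Gam (a i))"
proof -
  assume "\<forall>i. a i > 0"
  then have "prob_space (Gam (a i))" for i by (intro prob_space_Gam) auto
  then show ?thesis unfolding product_sigma_finite_def
    by (auto intro: prob_space_imp_sigma_finite)
qed

lemma core1:
  assumes a: "\<forall>i. a i > 0"
  shows "distr (mu a 1) (PB 1 \<Otimes>\<^sub>M borel) (\<lambda>y. (Qv 1 y, Sg 1 y)) = return (PB 1) (\<lambda>j\<in>{..<1}. 1) \<Otimes>\<^sub>M Gam (a 0)"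
proof -
  interpret psf: product_sigma_finite "\<lambda>i. Gam (a i)" using psf_Gam[OF a] .
  interpret P: prob_space "mu a 1" by (rule prob_space_PiM) (use a prob_space_Gam in auto)
  have "distr (mu a 1) (PB 1 \<Otimes>\<^sub>M borel) (\<lambda>y. (Qv 1 y, Sg 1 y)) = distr (mu a 1) (PB 1 \<Otimes>\<^sub>M borel) (\<lambda>y. ((\<lambda>j\<in>{..<1}. 1), y 0))"
  proof (rule distr_cong_AE)
    show "AE y in mu a 1. (Qv 1 y, Sg 1 y) = ((\<lambda>j\<in>{..<1}. 1), y 0)"
      using AE_mu_pos[OF a, of 1]
      by eventually_elim (auto simp: Qv_def Sg_def fun_eq_iff lessThan_Suc)
    show "(\<lambda>y. (Qv 1 y, Sg 1 y)) \<in> measurable (mu a 1) (PB 1 \<Otimes>\<^sub>M borel)"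
      by (simp add: measurable_cong_sets[OF sets_mu refl])
    show "(\<lambda>y. ((\<lambda>j\<in>{..<1}. 1::real), y 0)) \<in> measurable (mu a 1) (PB 1 \<Otimes>\<^sub>M borel)"
      by (simp add: measurable_cong_sets[OF sets_mu refl])
  qed simp_all
  also have "\<dots> = return (PB 1) (\<lambda>j\<in>{..<1}. 1) \<Otimes>\<^sub>M distr (mu a 1) borel (\<lambda>y. y 0)"
    by (rule return_pair[OF P.prob_space_axioms]) (auto simp: measurable_cong_sets[OF sets_mu refl] space_PiM)
  also have "distr (mu a 1) borel (\<lambda>y. y 0) = Gam (a 0)"
  proof -
    have "distr (mu a 1) borel (\<lambda>y. y 0) = distr (PiM {0} (\<lambda>i. Gam (a i))) (Gam (a 0)) (\<lambda>y. y 0)"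
      by (rule distr_cong) (auto simp: lessThan_Suc)
    then show ?thesis using psf.distr_singleton[of 0] by simp
  qed
  finally show ?thesis .
qed

definition phi :: "nat \<Rightarrow> (nat \<Rightarrow> real) \<times> real \<Rightarrow> (nat \<Rightarrow> real)" where
  "phi n p = (\<lambda>j\<in>{..<Suc n}. if j < n then fst p j * snd p else 1 - snd p)"

lemma phi_meas[measurable]: "phi n \<in> measurable (PB n \<Otimes>\<^sub>M borel) (PB (Suc n))"
  unfolding phi_def
proof (rule measurable_restrict)
  fix j assume "j \<in> {..<Suc n}"
  show "(\<lambda>p. if j < n then fst p j * snd p else 1 - snd p) \<in> borel_measurable (PB n \<Otimes>\<^sub>M borel)"
    by (cases "j < n") auto
qed

definition ins :: "nat \<Rightarrow> (nat \<Rightarrow> real) \<times> real \<Rightarrow> (nat \<Rightarrow> real)" where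
  "ins n p = merge {..<n} {n} (fst p, \<lambda>i\<in>{n}. snd p)"

lemma ins_meas[measurable]: "ins n \<in> measurable (PB n \<Otimes>\<^sub>M borel) (PB (Suc n))"
proof -
  have "(\<lambda>p. (fst p, \<lambda>i\<in>{n}. snd p)) \<in> measurable (PB n \<Otimes>\<^sub>M borel) (PB n \<Otimes>\<^sub>M PiM {n} (\<lambda>_. borel))"
    by measurable
  from measurable_compose[OF this measurable_merge]
  have "(\<lambda>p. merge {..<n} {n} (fst p, \<lambda>i\<in>{n}. snd p)) \<in> measurable (PB n \<Otimes>\<^sub>M borel) (PiM ({..<n} \<union> {n}) (\<lambda>_. borel))" .
  moreover have "{..<n} \<union> {n} = {..<Suc n}" by auto
  ultimately show ?thesis unfolding ins_def by simp
qed

lemma ins_apply: "ins n p i = (if i < n then fst p i else if i = n then snd p else undefined)"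
  by (auto simp: ins_def merge_def)

lemma mu_Suc:
  assumes a: "\<forall>i. a i > 0"
  shows "mu a (Suc n) = distr (mu a n \<Otimes>\<^sub>M Gam (a n)) (mu a (Suc n)) (ins n)"
proof -
  interpret psf: product_sigma_finite "\<lambda>i. Gam (a i)" using psf_Gam[OF a] .
  interpret S1: finite_product_sigma_finite "\<lambda>i. Gam (a i)" "{n}" by standard simp
  interpret Sn: finite_product_sigma_finite "\<lambda>i. Gam (a i)" "{..<n}" by standard simp
  have "mu a n \<Otimes>\<^sub>M PiM {n} (\<lambda>i. Gam (a i)) = distr (mu a n) (mu a n) (\<lambda>x. x) \<Otimes>\<^sub>M distr (Gam (a n)) (PiM {n} (\<lambda>i. Gam (a i))) (\<lambda>x. \<lambda>i\<in>{n}. x)"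
    by (simp add: psf.distr_component)
  also have "\<dots> = distr (mu a n \<Otimes>\<^sub>M Gam (a n)) (mu a n \<Otimes>\<^sub>M PiM {n} (\<lambda>i. Gam (a i))) (\<lambda>(x, y). (x, \<lambda>i\<in>{n}. y))"
    by (rule pair_measure_distr) (auto simp: psf.distr_component intro: S1.sigma_finite_measure_axioms)
  finally have eq1: "mu a n \<Otimes>\<^sub>M PiM {n} (\<lambda>i. Gam (a i)) = \<dots>" .
  have "mu a (Suc n) = PiM ({..<n} \<union> {n}) (\<lambda>i. Gam (a i))"
    by (rule arg_cong[where f="\<lambda>I. PiM I (\<lambda>i. Gam (a i))"]) auto
  also have "\<dots> = distr (mu a n \<Otimes>\<^sub>M PiM {n} (\<lambda>i. Gam (a i))) (PiM ({..<n} \<union> {n}) (\<lambda>i. Gam (a i))) (merge {..<n} {n})"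
    by (rule psf.distr_merge[symmetric]) auto
  also have "\<dots> = distr (distr (mu a n \<Otimes>\<^sub>M Gam (a n)) (mu a n \<Otimes>\<^sub>M PiM {n} (\<lambda>i. Gam (a i))) (\<lambda>(x, y). (x, \<lambda>i\<in>{n}. y))) (PiM ({..<n} \<union> {n}) (\<lambda>i. Gam (a i))) (merge {..<n} {n})"
    by (rule arg_cong[where f="\<lambda>N. distr N (PiM ({..<n} \<union> {n}) (\<lambda>i. Gam (a i))) (merge {..<n} {n})"]) (rule eq1)
  also have "\<dots> = distr (mu a n \<Otimes>\<^sub>M Gam (a n)) (PiM ({..<n} \<union> {n}) (\<lambda>i. Gam (a i))) (merge {..<n} {n} \<circ> (\<lambda>(x, y). (x, \<lambda>i\<in>{n}. y)))"
  proof (rule distr_distr[OF measurable_merge])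
    show "(\<lambda>(x, y). (x, \<lambda>i\<in>{n}. y)) \<in> measurable (mu a n \<Otimes>\<^sub>M Gam (a n)) (mu a n \<Otimes>\<^sub>M PiM {n} (\<lambda>i. Gam (a i)))"
      unfolding case_prod_unfold by measurable
  qed
  also have "\<dots> = distr (mu a n \<Otimes>\<^sub>M Gam (a n)) (mu a (Suc n)) (ins n)"
  proof (rule distr_cong)
    show "sets (PiM ({..<n} \<union> {n}) (\<lambda>i. Gam (a i))) = sets (mu a (Suc n))"
      by (rule arg_cong[where f="\<lambda>I. sets (PiM I (\<lambda>i. Gam (a i)))"]) auto
  qed (simp_all add: ins_def case_prod_unfold)
  finally show ?thesis .
qed

lemma core_step:
  assumes a: "\<forall>i. a i > 0" and n: "n \<ge> 1"
    and nu: "prob_space \<nu>" and nus[measurable_cong]: "sets \<nu> = sets (PB n)"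
    and IH: "distr (mu a n) (PB n \<Otimes>\<^sub>M borel) (\<lambda>y. (Qv n y, Sg n y)) = \<nu> \<Otimes>\<^sub>M Gam (\<Sum>i<n. a i)"
  shows "distr (mu a (Suc n)) (PB (Suc n) \<Otimes>\<^sub>M borel) (\<lambda>y. (Qv (Suc n) y, Sg (Suc n) y))
       = distr (\<nu> \<Otimes>\<^sub>M Bt (\<Sum>i<n. a i) (a n)) (PB (Suc n)) (phi n) \<Otimes>\<^sub>M Gam (\<Sum>i<Suc n. a i)"
proof -
  note sets_mu[measurable_cong]
  define A where "A = (\<Sum>i<n. a i)"
  have A: "A > 0" unfolding A_def using a n by (intro sum_pos) (auto simp: lessThan_empty_iff)
  have an: "a n > 0" using a by auto
  interpret PN: prob_space \<nu> by (rule nu)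
  interpret GA: prob_space "Gam A" by (rule prob_space_Gam[OF A])
  interpret G: prob_space "Gam (a n)" by (rule prob_space_Gam[OF an])
  interpret G': prob_space "Gam (A + a n)" using A an by (intro prob_space_Gam) auto
  interpret B: prob_space "Bt A (a n)" by (rule lukacs2(2)[OF A an])
  interpret Mn: prob_space "mu a n" by (rule prob_space_PiM) (use a prob_space_Gam in auto)
  interpret MnG: pair_prob_space "mu a n" "Gam (a n)" ..
  interpret NB: pair_prob_space \<nu> "Bt A (a n)" ..
  define F where "F = (\<lambda>y. (Qv (Suc n) y, Sg (Suc n) y))"
  define H where "H = (\<lambda>p. (phi n (Qv n (fst p), Sg n (fst p) / (Sg n (fst p) + snd p)), Sg n (fst p) + snd p))"
  have Fm[measurable]: "F \<in> measurable (PB (Suc n)) (PB (Suc n) \<Otimes>\<^sub>M borel)"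
    unfolding F_def by measurable
  have insm: "ins n \<in> measurable (mu a n \<Otimes>\<^sub>M Gam (a n)) (mu a (Suc n))"
    by (simp add: measurable_cong_sets[OF sets_pair_measure_cong[OF sets_mu sets_Gam] sets_mu])
  have mS: "mu a (Suc n) = distr (mu a n \<Otimes>\<^sub>M Gam (a n)) (mu a (Suc n)) (ins n)"
    by (rule mu_Suc[OF a])
  have "distr (mu a (Suc n)) (PB (Suc n) \<Otimes>\<^sub>M borel) F
      = distr (distr (mu a n \<Otimes>\<^sub>M Gam (a n)) (mu a (Suc n)) (ins n)) (PB (Suc n) \<Otimes>\<^sub>M borel) F"
    by (rule arg_cong[where f="\<lambda>N. distr N (PB (Suc n) \<Otimes>\<^sub>M borel) F"]) (rule mS)
  also have "\<dots> = distr (mu a n \<Otimes>\<^sub>M Gam (a n)) (PB (Suc n) \<Otimes>\<^sub>M borel) (F \<circ> ins n)"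
    by (rule distr_distr[OF _ insm]) (simp add: measurable_cong_sets[OF sets_mu refl])
  also have "\<dots> = distr (mu a n \<Otimes>\<^sub>M Gam (a n)) (PB (Suc n) \<Otimes>\<^sub>M borel) H"
  proof (rule distr_cong_AE)
    have "AE y in mu a (Suc n). \<forall>i\<in>{..<Suc n}. y i > 0" by (rule AE_mu_pos[OF a])
    then have "AE y in distr (mu a n \<Otimes>\<^sub>M Gam (a n)) (mu a (Suc n)) (ins n). \<forall>i\<in>{..<Suc n}. y i > 0"
      by (subst (asm) mS)
    from AE_distrD[OF insm this]
    show "AE p in mu a n \<Otimes>\<^sub>M Gam (a n). (F \<circ> ins n) p = H p"
    proof (rule eventually_mono)
      fix p :: "(nat \<Rightarrow> real) \<times> real"
      assume pos: "\<forall>i\<in>{..<Suc n}. ins n p i > 0"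
      have yp: "fst p i > 0" if "i < n" for i
        using pos[rule_format, of i] that by (simp add: ins_apply)
      have zp: "snd p > 0"
        using pos[rule_format, of n] by (simp add: ins_apply)
      have S: "Sg n (fst p) > 0" unfolding Sg_def using yp n by (intro sum_pos) (auto simp: lessThan_empty_iff)
      have S': "Sg (Suc n) (ins n p) = Sg n (fst p) + snd p"
        by (simp add: Sg_def ins_apply)
      show "(F \<circ> ins n) p = H p"
      proof -
        define s z where "s = Sg n (fst p)" and "z = snd p"
        have e1: "x / (s + z) = x / s * (s / (s + z))" for x
          using S unfolding s_def by simp
        have e2: "z / (s + z) = 1 - s / (s + z)"
          using S zp unfolding s_def z_def by (simp add: field_simps)
        show ?thesis
          unfolding F_def H_def comp_def S' Qv_def phi_def
          using S by (auto simp: fun_eq_iff ins_apply e1[symmetric] e2[symmetric] s_def[symmetric] z_def[symmetric])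
      qed
    qed
    show "F \<circ> ins n \<in> measurable (mu a n \<Otimes>\<^sub>M Gam (a n)) (PB (Suc n) \<Otimes>\<^sub>M borel)"
      using insm by (simp add: measurable_cong_sets[OF refl sets_mu, symmetric])
    show "H \<in> measurable (mu a n \<Otimes>\<^sub>M Gam (a n)) (PB (Suc n) \<Otimes>\<^sub>M borel)"
      unfolding H_def by measurable
  qed simp_all
  also have "\<dots> = distr ((\<nu> \<Otimes>\<^sub>M Gam A) \<Otimes>\<^sub>M Gam (a n)) (PB (Suc n) \<Otimes>\<^sub>M borel) (\<lambda>((q, s), z). (phi n (q, s / (s + z)), s + z))"
  proof -
    define K1 where "K1 = (\<lambda>(y::nat\<Rightarrow>real, z::real). ((Qv n y, Sg n y), z))"
    define H3 where "H3 = (\<lambda>((q::nat\<Rightarrow>real, s::real), z::real). (phi n (q, s / (s + z)), s + z))"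
    have K1m: "K1 \<in> measurable (mu a n \<Otimes>\<^sub>M Gam (a n)) ((PB n \<Otimes>\<^sub>M borel) \<Otimes>\<^sub>M borel)"
      unfolding K1_def case_prod_unfold by measurable
    have H3m: "H3 \<in> measurable ((PB n \<Otimes>\<^sub>M borel) \<Otimes>\<^sub>M borel) (PB (Suc n) \<Otimes>\<^sub>M borel)"
      unfolding H3_def case_prod_unfold by measurable
    have K: "distr (mu a n \<Otimes>\<^sub>M Gam (a n)) ((PB n \<Otimes>\<^sub>M borel) \<Otimes>\<^sub>M borel) K1 = (\<nu> \<Otimes>\<^sub>M Gam A) \<Otimes>\<^sub>M Gam (a n)"
    proof -
      have "(\<nu> \<Otimes>\<^sub>M Gam A) \<Otimes>\<^sub>M Gam (a n) = distr (mu a n) (PB n \<Otimes>\<^sub>M borel) (\<lambda>y. (Qv n y, Sg n y)) \<Otimes>\<^sub>M distr (Gam (a n)) borel (\<lambda>x. x)"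
        by (simp add: IH A_def distr_Gam_borel)
      also have "\<dots> = distr (mu a n \<Otimes>\<^sub>M Gam (a n)) ((PB n \<Otimes>\<^sub>M borel) \<Otimes>\<^sub>M borel) (\<lambda>(x, y). ((Qv n x, Sg n x), y))"
        by (rule pair_measure_distr) (auto simp: distr_Gam_borel measurable_cong_sets[OF sets_mu refl] intro: G.sigma_finite_measure_axioms)
      finally show ?thesis unfolding K1_def by simp
    qed
    have "distr (mu a n \<Otimes>\<^sub>M Gam (a n)) (PB (Suc n) \<Otimes>\<^sub>M borel) H
        = distr (mu a n \<Otimes>\<^sub>M Gam (a n)) (PB (Suc n) \<Otimes>\<^sub>M borel) (H3 \<circ> K1)"
      by (rule distr_cong) (auto simp: H_def H3_def K1_def)
    also have "\<dots> = distr (distr (mu a n \<Otimes>\<^sub>M Gam (a n)) ((PB n \<Otimes>\<^sub>M borel) \<Otimes>\<^sub>M borel) K1) (PB (Suc n) \<Otimes>\<^sub>M borel) H3"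
      by (rule distr_distr[symmetric, OF H3m K1m])
    also have "\<dots> = distr ((\<nu> \<Otimes>\<^sub>M Gam A) \<Otimes>\<^sub>M Gam (a n)) (PB (Suc n) \<Otimes>\<^sub>M borel) H3"
      by (simp only: K)
    finally show ?thesis unfolding H3_def .
  qed
  also have "\<dots> = distr (\<nu> \<Otimes>\<^sub>M Bt A (a n)) (PB (Suc n)) (phi n) \<Otimes>\<^sub>M Gam (A + a n)"
  proof -
    define H3 where "H3 = (\<lambda>((q::nat\<Rightarrow>real, s::real), z::real). (phi n (q, s / (s + z)), s + z))"
    define as where "as = (\<lambda>(x::nat\<Rightarrow>real, (y::real, z::real)). ((x, y), z))"
    define as' where "as' = (\<lambda>((x::nat\<Rightarrow>real, y::real), z::real). (x, (y, z)))"
    define K2 where "K2 = (\<lambda>(q::nat\<Rightarrow>real, p::real\<times>real). (q, (fst p / (fst p + snd p), fst p + snd p)))"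
    define H4 where "H4 = (\<lambda>(q::nat\<Rightarrow>real, (w::real, t::real)). (phi n (q, w), t))"
    interpret GAG: pair_prob_space "Gam A" "Gam (a n)" ..
    interpret BG: pair_prob_space "Bt A (a n)" "Gam (A + a n)" ..
    have H3m: "H3 \<in> measurable ((PB n \<Otimes>\<^sub>M borel) \<Otimes>\<^sub>M borel) (PB (Suc n) \<Otimes>\<^sub>M borel)"
      unfolding H3_def case_prod_unfold by measurable
    have asm: "as \<in> measurable (\<nu> \<Otimes>\<^sub>M (Gam A \<Otimes>\<^sub>M Gam (a n))) ((\<nu> \<Otimes>\<^sub>M Gam A) \<Otimes>\<^sub>M Gam (a n))"
      unfolding as_def case_prod_unfold by measurable
    have asm': "as' \<in> measurable ((\<nu> \<Otimes>\<^sub>M Bt A (a n)) \<Otimes>\<^sub>M Gam (A + a n)) (\<nu> \<Otimes>\<^sub>M (Bt A (a n) \<Otimes>\<^sub>M Gam (A + a n)))"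
      unfolding as'_def case_prod_unfold by measurable
    have K2m: "K2 \<in> measurable (\<nu> \<Otimes>\<^sub>M (Gam A \<Otimes>\<^sub>M Gam (a n))) (PB n \<Otimes>\<^sub>M (borel \<Otimes>\<^sub>M borel))"
      unfolding K2_def case_prod_unfold by measurable
    have H4m: "H4 \<in> measurable (PB n \<Otimes>\<^sub>M (borel \<Otimes>\<^sub>M borel)) (PB (Suc n) \<Otimes>\<^sub>M borel)"
      unfolding H4_def case_prod_unfold by measurable
    have K2d: "distr (\<nu> \<Otimes>\<^sub>M (Gam A \<Otimes>\<^sub>M Gam (a n))) (PB n \<Otimes>\<^sub>M (borel \<Otimes>\<^sub>M borel)) K2
        = \<nu> \<Otimes>\<^sub>M (Bt A (a n) \<Otimes>\<^sub>M Gam (A + a n))"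
    proof -
      have "\<nu> \<Otimes>\<^sub>M (Bt A (a n) \<Otimes>\<^sub>M Gam (A + a n))
          = distr \<nu> (PB n) (\<lambda>x. x) \<Otimes>\<^sub>M distr (Gam A \<Otimes>\<^sub>M Gam (a n)) (borel \<Otimes>\<^sub>M borel) (\<lambda>p. (fst p / (fst p + snd p), fst p + snd p))"
      proof -
        have "distr \<nu> (PB n) (\<lambda>x. x) = distr \<nu> \<nu> (\<lambda>x. x)" by (rule distr_cong) (auto simp: nus)
        then show ?thesis by (simp add: lukacs2(1)[OF A an])
      qed
      also have "\<dots> = distr (\<nu> \<Otimes>\<^sub>M (Gam A \<Otimes>\<^sub>M Gam (a n))) (PB n \<Otimes>\<^sub>M (borel \<Otimes>\<^sub>M borel)) (\<lambda>(x, y). (x, (fst y / (fst y + snd y), fst y + snd y)))"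
        by (rule pair_measure_distr) (auto simp: lukacs2(1)[OF A an] intro: BG.sigma_finite_measure_axioms)
      finally show ?thesis unfolding K2_def by simp
    qed
    have "(\<nu> \<Otimes>\<^sub>M Gam A) \<Otimes>\<^sub>M Gam (a n) = distr (\<nu> \<Otimes>\<^sub>M (Gam A \<Otimes>\<^sub>M Gam (a n))) ((\<nu> \<Otimes>\<^sub>M Gam A) \<Otimes>\<^sub>M Gam (a n)) as"
      unfolding as_def by (rule pair_assoc) (rule nu, unfold_locales)
    then have "distr ((\<nu> \<Otimes>\<^sub>M Gam A) \<Otimes>\<^sub>M Gam (a n)) (PB (Suc n) \<Otimes>\<^sub>M borel) H3
        = distr (distr (\<nu> \<Otimes>\<^sub>M (Gam A \<Otimes>\<^sub>M Gam (a n))) ((\<nu> \<Otimes>\<^sub>M Gam A) \<Otimes>\<^sub>M Gam (a n)) as) (PB (Suc n) \<Otimes>\<^sub>M borel) H3"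
      by (rule arg_cong[where f="\<lambda>N. distr N (PB (Suc n) \<Otimes>\<^sub>M borel) H3"])
    also have "\<dots> = distr (\<nu> \<Otimes>\<^sub>M (Gam A \<Otimes>\<^sub>M Gam (a n))) (PB (Suc n) \<Otimes>\<^sub>M borel) (H3 \<circ> as)"
      by (rule distr_distr) (use H3m in \<open>simp add: measurable_cong_sets[OF sets_pair_measure_cong[OF sets_pair_measure_cong[OF nus sets_Gam] sets_Gam] refl]\<close>, rule asm)
    also have "\<dots> = distr (\<nu> \<Otimes>\<^sub>M (Gam A \<Otimes>\<^sub>M Gam (a n))) (PB (Suc n) \<Otimes>\<^sub>M borel) (H4 \<circ> K2)"
      by (rule distr_cong) (auto simp: H3_def as_def H4_def K2_def)
    also have "\<dots> = distr (distr (\<nu> \<Otimes>\<^sub>M (Gam A \<Otimes>\<^sub>M Gam (a n))) (PB n \<Otimes>\<^sub>M (borel \<Otimes>\<^sub>M borel)) K2) (PB (Suc n) \<Otimes>\<^sub>M borel) H4"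
      by (rule distr_distr[symmetric, OF H4m K2m])
    also have "\<dots> = distr (\<nu> \<Otimes>\<^sub>M (Bt A (a n) \<Otimes>\<^sub>M Gam (A + a n))) (PB (Suc n) \<Otimes>\<^sub>M borel) H4"
      by (simp only: K2d)
    also have "\<nu> \<Otimes>\<^sub>M (Bt A (a n) \<Otimes>\<^sub>M Gam (A + a n)) = distr ((\<nu> \<Otimes>\<^sub>M Bt A (a n)) \<Otimes>\<^sub>M Gam (A + a n)) (\<nu> \<Otimes>\<^sub>M (Bt A (a n) \<Otimes>\<^sub>M Gam (A + a n))) as'"
      unfolding as'_def by (rule pair_assoc') (rule nu, unfold_locales)
    also have "distr (distr ((\<nu> \<Otimes>\<^sub>M Bt A (a n)) \<Otimes>\<^sub>M Gam (A + a n)) (\<nu> \<Otimes>\<^sub>M (Bt A (a n) \<Otimes>\<^sub>M Gam (A + a n))) as') (PB (Suc n) \<Otimes>\<^sub>M borel) H4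
        = distr ((\<nu> \<Otimes>\<^sub>M Bt A (a n)) \<Otimes>\<^sub>M Gam (A + a n)) (PB (Suc n) \<Otimes>\<^sub>M borel) (H4 \<circ> as')"
      by (rule distr_distr) (use H4m in \<open>simp add: measurable_cong_sets[OF sets_pair_measure_cong[OF nus sets_pair_measure_cong[OF sets_Bt sets_Gam]] refl]\<close>, rule asm')
    also have "\<dots> = distr ((\<nu> \<Otimes>\<^sub>M Bt A (a n)) \<Otimes>\<^sub>M Gam (A + a n)) (PB (Suc n) \<Otimes>\<^sub>M borel) (\<lambda>(x, y). (phi n x, (\<lambda>x. x) y))"
      by (rule distr_cong) (auto simp: H4_def as'_def)
    also have "\<dots> = distr (\<nu> \<Otimes>\<^sub>M Bt A (a n)) (PB (Suc n)) (phi n) \<Otimes>\<^sub>M distr (Gam (A + a n)) borel (\<lambda>x. x)"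
      by (rule pair_measure_distr[symmetric]) (auto simp: distr_Gam_borel intro: G'.sigma_finite_measure_axioms)
    finally show ?thesis unfolding H3_def by (simp add: distr_Gam_borel)
  qed
  finally show ?thesis unfolding F_def A_def by simp
qed

theorem core:
  assumes a: "\<forall>i. a i > 0" and n: "n \<ge> 1"
  shows "\<exists>\<nu>. prob_space \<nu> \<and> sets \<nu> = sets (PB n) \<and>
    distr (mu a n) (PB n \<Otimes>\<^sub>M borel) (\<lambda>y. (Qv n y, Sg n y)) = \<nu> \<Otimes>\<^sub>M Gam (\<Sum>i<n. a i)"
  using n
proof (induction n rule: dec_induct)
  case base
  show ?case
  proof (intro exI conjI)
    show "prob_space (return (PB 1) (\<lambda>j\<in>{..<1}. 1::real))"
      by (rule prob_space_return) (auto simp: space_PiM)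
    show "sets (return (PB 1) (\<lambda>j\<in>{..<1}. 1::real)) = sets (PB 1)" by simp
    show "distr (mu a 1) (PB 1 \<Otimes>\<^sub>M borel) (\<lambda>y. (Qv 1 y, Sg 1 y)) = return (PB 1) (\<lambda>j\<in>{..<1}. 1) \<Otimes>\<^sub>M Gam (\<Sum>i<1. a i)"
      using core1[OF a] by simp
  qed
next
  case (step n)
  then obtain \<nu> where nu: "prob_space \<nu>" "sets \<nu> = sets (PB n)"
    "distr (mu a n) (PB n \<Otimes>\<^sub>M borel) (\<lambda>y. (Qv n y, Sg n y)) = \<nu> \<Otimes>\<^sub>M Gam (\<Sum>i<n. a i)" by blast
  have A: "(\<Sum>i<n. a i) > 0" using a step(1) by (intro sum_pos) (auto simp: lessThan_empty_iff)
  have an: "a n > 0" using a by auto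
  interpret PN: prob_space \<nu> by (rule nu)
  interpret B: prob_space "Bt (\<Sum>i<n. a i) (a n)" by (rule lukacs2(2)[OF A an])
  interpret NB: pair_prob_space \<nu> "Bt (\<Sum>i<n. a i) (a n)" ..
  show ?case
  proof (intro exI conjI)
    show "prob_space (distr (\<nu> \<Otimes>\<^sub>M Bt (\<Sum>i<n. a i) (a n)) (PB (Suc n)) (phi n))"
      by (rule NB.prob_space_distr) (simp add: measurable_cong_sets[OF sets_pair_measure_cong[OF nu(2) sets_Bt] refl])
    show "sets (distr (\<nu> \<Otimes>\<^sub>M Bt (\<Sum>i<n. a i) (a n)) (PB (Suc n)) (phi n)) = sets (PB (Suc n))" by simp
    show "distr (mu a (Suc n)) (PB (Suc n) \<Otimes>\<^sub>M borel) (\<lambda>y. (Qv (Suc n) y, Sg (Suc n) y)) =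
      distr (\<nu> \<Otimes>\<^sub>M Bt (\<Sum>i<n. a i) (a n)) (PB (Suc n)) (phi n) \<Otimes>\<^sub>M Gam (\<Sum>i<Suc n. a i)"
      by (rule core_step[OF a step(1) nu])
  qed
qed



lemma pair_swap12:
  assumes "prob_space M1" "prob_space M2" "prob_space M3"
  shows "distr (M1 \<Otimes>\<^sub>M (M2 \<Otimes>\<^sub>M M3)) (M2 \<Otimes>\<^sub>M (M1 \<Otimes>\<^sub>M M3)) (\<lambda>(x, (y, z)). (y, (x, z))) = M2 \<Otimes>\<^sub>M (M1 \<Otimes>\<^sub>M M3)"
proof -
  interpret P1: prob_space M1 by fact
  interpret P2: prob_space M2 by fact
  interpret P3: prob_space M3 by fact
  interpret P13: pair_prob_space M1 M3 ..
  interpret P23: pair_prob_space M2 M3 ..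
  interpret P2_13: pair_prob_space M2 "M1 \<Otimes>\<^sub>M M3" ..
  interpret P1_23: pair_prob_space M1 "M2 \<Otimes>\<^sub>M M3" ..
  let ?f = "\<lambda>(x, (y, z)). (y, (x, z))"
  have fm: "?f \<in> measurable (M1 \<Otimes>\<^sub>M (M2 \<Otimes>\<^sub>M M3)) (M2 \<Otimes>\<^sub>M (M1 \<Otimes>\<^sub>M M3))"
    by (simp add: case_prod_unfold)
  show ?thesis
  proof (rule pair_measure_eqI[symmetric])
    show "sigma_finite_measure M2" by unfold_locales
    show "sigma_finite_measure (M1 \<Otimes>\<^sub>M M3)" by unfold_locales
    show "sets (M2 \<Otimes>\<^sub>M (M1 \<Otimes>\<^sub>M M3)) = sets (distr (M1 \<Otimes>\<^sub>M (M2 \<Otimes>\<^sub>M M3)) (M2 \<Otimes>\<^sub>M (M1 \<Otimes>\<^sub>M M3)) ?f)"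
      by simp
    fix B C assume B: "B \<in> sets M2" and C: "C \<in> sets (M1 \<Otimes>\<^sub>M M3)"
    have BC: "B \<times> C \<in> sets (M2 \<Otimes>\<^sub>M (M1 \<Otimes>\<^sub>M M3))" using B C by simp
    have pre: "?f -` (B \<times> C) \<inter> space (M1 \<Otimes>\<^sub>M (M2 \<Otimes>\<^sub>M M3)) \<in> sets (M1 \<Otimes>\<^sub>M (M2 \<Otimes>\<^sub>M M3))"
      using measurable_sets[OF fm BC] .
    have "emeasure (distr (M1 \<Otimes>\<^sub>M (M2 \<Otimes>\<^sub>M M3)) (M2 \<Otimes>\<^sub>M (M1 \<Otimes>\<^sub>M M3)) ?f) (B \<times> C)
        = emeasure (M1 \<Otimes>\<^sub>M (M2 \<Otimes>\<^sub>M M3)) (?f -` (B \<times> C) \<inter> space (M1 \<Otimes>\<^sub>M (M2 \<Otimes>\<^sub>M M3)))"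
      by (rule emeasure_distr[OF fm BC])
    also have "\<dots> = (\<integral>\<^sup>+x. emeasure (M2 \<Otimes>\<^sub>M M3) (Pair x -` (?f -` (B \<times> C) \<inter> space (M1 \<Otimes>\<^sub>M (M2 \<Otimes>\<^sub>M M3)))) \<partial>M1)"
      by (rule P23.emeasure_pair_measure_alt[OF pre])
    also have "\<dots> = (\<integral>\<^sup>+x. emeasure M2 B * emeasure M3 (Pair x -` C) \<partial>M1)"
    proof (rule nn_integral_cong)
      fix x assume x: "x \<in> space M1"
      have "Pair x -` (?f -` (B \<times> C) \<inter> space (M1 \<Otimes>\<^sub>M (M2 \<Otimes>\<^sub>M M3))) = B \<times> (Pair x -` C)"
        using x sets.sets_into_space[OF B] sets.sets_into_space[OF C]
        unfolding space_pair_measure by (auto 0 0 simp del: mem_Times_iff) (auto dest!: subsetD)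
      moreover have "Pair x -` C \<in> sets M3" using C by (rule sets_Pair1)
      ultimately show "emeasure (M2 \<Otimes>\<^sub>M M3) (Pair x -` (?f -` (B \<times> C) \<inter> space (M1 \<Otimes>\<^sub>M (M2 \<Otimes>\<^sub>M M3)))) = emeasure M2 B * emeasure M3 (Pair x -` C)"
        using B by (simp add: P3.emeasure_pair_measure_Times)
    qed
    also have "\<dots> = emeasure M2 B * (\<integral>\<^sup>+x. emeasure M3 (Pair x -` C) \<partial>M1)"
      by (rule nn_integral_cmult) (rule P3.measurable_emeasure_Pair[OF C])
    also have "\<dots> = emeasure M2 B * emeasure (M1 \<Otimes>\<^sub>M M3) C"
      by (simp add: P3.emeasure_pair_measure_alt[OF C])
    finally show "emeasure M2 B * emeasure (M1 \<Otimes>\<^sub>M M3) C = emeasure (distr (M1 \<Otimes>\<^sub>M (M2 \<Otimes>\<^sub>M M3)) (M2 \<Otimes>\<^sub>M (M1 \<Otimes>\<^sub>M M3)) ?f) (B \<times> C)" ..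
  qed
qed

lemma indep_rv_compose:
  assumes "indep_rv M Ma A Mb B" "f \<in> measurable Ma Mc" "g \<in> measurable Mb Md" "prob_space M"
  shows "indep_rv M Mc (\<lambda>x. f (A x)) Md (\<lambda>x. g (B x))"
proof -
  interpret prob_space M by fact
  have A: "A \<in> measurable M Ma" and B: "B \<in> measurable M Mb"
    and I: "indep_set {A -` S \<inter> space M |S. S \<in> sets Ma} {B -` S \<inter> space M |S. S \<in> sets Mb}"
    using assms(1) by (auto simp: indep_rv_def)
  show ?thesis unfolding indep_rv_def
  proof (intro conjI)
    show "(\<lambda>x. f (A x)) \<in> measurable M Mc" using A assms(2) by simp
    show "(\<lambda>x. g (B x)) \<in> measurable M Md" using B assms(3) by simp
    show "indep_set {(\<lambda>x. f (A x)) -` S \<inter> space M |S. S \<in> sets Mc} {(\<lambda>x. g (B x)) -` S \<inter> space M |S. S \<in> sets Md}"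
      using I unfolding indep_set_def
    proof (rule indep_sets_mono_sets)
      fix i :: bool
      show "(case i of True \<Rightarrow> {(\<lambda>x. f (A x)) -` S \<inter> space M |S. S \<in> sets Mc} | False \<Rightarrow> {(\<lambda>x. g (B x)) -` S \<inter> space M |S. S \<in> sets Md})
         \<subseteq> (case i of True \<Rightarrow> {A -` S \<inter> space M |S. S \<in> sets Ma} | False \<Rightarrow> {B -` S \<inter> space M |S. S \<in> sets Mb})"
      proof (cases i)
        case True
        show ?thesis using True
        proof (clarsimp)
          fix S assume S: "S \<in> sets Mc"
          show "\<exists>S'. (\<lambda>x. f (A x)) -` S \<inter> space M = A -` S' \<inter> space M \<and> S' \<in> sets Ma"
            using A measurable_sets[OF assms(2) S]
            by (intro exI[of _ "f -` S \<inter> space Ma"]) (auto dest: measurable_space)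
        qed
      next
        case False
        show ?thesis using False
        proof (clarsimp)
          fix S assume S: "S \<in> sets Md"
          show "\<exists>S'. (\<lambda>x. g (B x)) -` S \<inter> space M = B -` S' \<inter> space M \<and> S' \<in> sets Mb"
            using B measurable_sets[OF assms(3) S]
            by (intro exI[of _ "g -` S \<inter> space Mb"]) (auto dest: measurable_space)
        qed
      qed
    qed
  qed
qed

lemma indep_rv_const:
  assumes "prob_space M" "A \<in> measurable M Ma" "B \<in> measurable M Mb" "\<And>x. x \<in> space M \<Longrightarrow> B x = c"
  shows "indep_rv M Ma A Mb B"
proof -
  interpret prob_space M by fact
  show ?thesis unfolding indep_rv_def
  proof (intro conjI assms indep_setI)
    show "{A -` S \<inter> space M |S. S \<in> sets Ma} \<subseteq> events" using assms(2) by auto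
    show "{B -` S \<inter> space M |S. S \<in> sets Mb} \<subseteq> events" using assms(3) by auto
    fix a b assume a: "a \<in> {A -` S \<inter> space M |S. S \<in> sets Ma}" and b: "b \<in> {B -` S \<inter> space M |S. S \<in> sets Mb}"
    from b obtain S where b': "b = B -` S \<inter> space M" by auto
    have "b = {} \<or> b = space M" using assms(4) unfolding b' by (cases "c \<in> S") auto
    then show "prob (a \<inter> b) = prob a * prob b"
    proof
      assume "b = space M"
      moreover have "a \<subseteq> space M" using a by auto
      ultimately show ?thesis by (simp add: Int_absorb2 prob_space)
    qed simp
  qed
qed

lemma distr_pair_snd':
  assumes "prob_space M1" "prob_space M2"
  shows "distr (M1 \<Otimes>\<^sub>M M2) M2 snd = M2"
proof (intro measure_eqI)
  interpret P1: prob_space M1 by fact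
  interpret P2: prob_space M2 by fact
  fix A assume A: "A \<in> sets (distr (M1 \<Otimes>\<^sub>M M2) M2 snd)"
  from A have "emeasure (distr (M1 \<Otimes>\<^sub>M M2) M2 snd) A = emeasure (M1 \<Otimes>\<^sub>M M2) (space M1 \<times> A)"
    by (auto simp add: emeasure_distr space_pair_measure dest: sets.sets_into_space intro!: arg_cong2[where f=emeasure])
  with A show "emeasure (distr (M1 \<Otimes>\<^sub>M M2) M2 snd) A = emeasure M2 A"
    by (simp add: P2.emeasure_pair_measure_Times P1.emeasure_space_1)
qed simp

lemma indep_rv_of_product:
  assumes M: "prob_space M" and A: "A \<in> measurable M Ma" and B: "B \<in> measurable M Mb"
    and P1: "prob_space \<mu>1" and P2: "prob_space \<mu>2" and s1: "sets \<mu>1 = sets Ma" and s2: "sets \<mu>2 = sets Mb"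
    and eq: "distr M (Ma \<Otimes>\<^sub>M Mb) (\<lambda>x. (A x, B x)) = \<mu>1 \<Otimes>\<^sub>M \<mu>2"
  shows "indep_rv M Ma A Mb B"
proof -
  interpret M: prob_space M by fact
  interpret P1: prob_space \<mu>1 by fact
  interpret P2: prob_space \<mu>2 by fact
  have AB: "(\<lambda>x. (A x, B x)) \<in> measurable M (Ma \<Otimes>\<^sub>M Mb)" using A B by simp
  have "distr M Ma A = distr (distr M (Ma \<Otimes>\<^sub>M Mb) (\<lambda>x. (A x, B x))) Ma fst"
    using AB by (subst distr_distr) (auto simp: comp_def)
  also have "\<dots> = distr (\<mu>1 \<Otimes>\<^sub>M \<mu>2) Ma fst" by (simp only: eq)
  also have "\<dots> = distr (\<mu>1 \<Otimes>\<^sub>M \<mu>2) \<mu>1 fst" by (rule distr_cong) (auto simp: s1)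
  also have "\<dots> = \<mu>1" by (rule P2.distr_pair_fst)
  finally have d1: "distr M Ma A = \<mu>1" .
  have "distr M Mb B = distr (distr M (Ma \<Otimes>\<^sub>M Mb) (\<lambda>x. (A x, B x))) Mb snd"
    using AB by (subst distr_distr) (auto simp: comp_def)
  also have "\<dots> = distr (\<mu>1 \<Otimes>\<^sub>M \<mu>2) Mb snd" by (simp only: eq)
  also have "\<dots> = distr (\<mu>1 \<Otimes>\<^sub>M \<mu>2) \<mu>2 snd" by (rule distr_cong) (auto simp: s2)
  also have "\<dots> = \<mu>2" by (rule distr_pair_snd'[OF P1 P2])
  finally have d2: "distr M Mb B = \<mu>2" .
  show ?thesis unfolding indep_rv_iff[OF M] using A B eq d1 d2 by simp
qed



lemma indep_var_imp_rv:
  assumes "prob_space M" "prob_space.indep_var M S X T Y"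
  shows "indep_rv M S X T Y"
proof -
  interpret prob_space M by fact
  from assms(2)[unfolded indep_var_eq] have rv: "X \<in> measurable M S" "Y \<in> measurable M T"
    and I: "indep_set (sigma_sets (space M) {X -` A \<inter> space M |A. A \<in> sets S}) (sigma_sets (space M) {Y -` A \<inter> space M |A. A \<in> sets T})"
    by auto
  show ?thesis unfolding indep_rv_def
  proof (intro conjI rv)
    show "indep_set {X -` A \<inter> space M |A. A \<in> sets S} {Y -` A \<inter> space M |A. A \<in> sets T}"
      using I unfolding indep_set_def
      by (rule indep_sets_mono_sets) (auto split: bool.split)
  qed
qed

lemma gp_prob: "gamma_process N g m \<Longrightarrow> prob_space N"
  by (simp add: gamma_process_def)
lemma gp_meas: "gamma_process N g m \<Longrightarrow> t \<ge> 0 \<Longrightarrow> g t \<in> borel_measurable N"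
  by (simp add: gamma_process_def)
lemma gp_zero: "gamma_process N g m \<Longrightarrow> \<omega> \<in> space N \<Longrightarrow> g 0 \<omega> = 0"
  by (simp add: gamma_process_def)
lemma gp_indep: "gamma_process N g m \<Longrightarrow> 0 \<le> ts 0 \<Longrightarrow> (\<forall>i<n. ts i < ts (Suc i)) \<Longrightarrow>
   prob_space.indep_vars N (\<lambda>_. borel) (\<lambda>i \<omega>. g (ts (Suc i)) \<omega> - g (ts i) \<omega>) {..<n}"
  by (simp add: gamma_process_def)
lemma gp_distributed: "gamma_process N g m \<Longrightarrow> 0 \<le> s \<Longrightarrow> s < t \<Longrightarrow>
   distributed N lborel (\<lambda>\<omega>. g t \<omega> - g s \<omega>) (\<lambda>x. ennreal (gd (m * (t - s)) x))"
  by (simp add: gamma_process_def gd_def)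
lemma gp_distr: "gamma_process N g m \<Longrightarrow> 0 \<le> s \<Longrightarrow> s < t \<Longrightarrow>
   distr N borel (\<lambda>\<omega>. g t \<omega> - g s \<omega>) = Gam (m * (t - s))"
  by (rule distributed_Gam[OF gp_distributed])

lemma indep_rv_cong:
  assumes "indep_rv M Ma A Mb B" "\<And>x. x \<in> space M \<Longrightarrow> A x = A' x" "\<And>x. x \<in> space M \<Longrightarrow> B x = B' x"
  shows "indep_rv M Ma A' Mb B'"
proof -
  have e1: "{A -` S \<inter> space M |S. S \<in> sets Ma} = {A' -` S \<inter> space M |S. S \<in> sets Ma}"
    using assms(2) by (auto simp: vimage_def)
  have e2: "{B -` S \<inter> space M |S. S \<in> sets Mb} = {B' -` S \<inter> space M |S. S \<in> sets Mb}"
    using assms(3) by (auto simp: vimage_def)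
  have "A' \<in> measurable M Ma" using assms(1,2) by (auto simp: indep_rv_def cong: measurable_cong)
  moreover have "B' \<in> measurable M Mb" using assms(1,3) by (auto simp: indep_rv_def cong: measurable_cong)
  ultimately show ?thesis using assms(1) unfolding indep_rv_def e1 e2 by simp
qed

lemma incr_mono:
  assumes "\<forall>i<n. (u::nat\<Rightarrow>real) i < u (Suc i)"
  shows "i \<le> j \<Longrightarrow> j \<le> n \<Longrightarrow> u i \<le> u j"
proof (induction j)
  case (Suc j)
  show ?case
  proof (cases "i = Suc j")
    case False
    then have "i \<le> j" using Suc by auto
    then have "u i \<le> u j" using Suc by auto
    also have "u j \<le> u (Suc j)" using assms Suc by (auto intro: less_imp_le)
    finally show ?thesis .
  qed simp
qed simp

lemma grid_law:
  assumes gp: "gamma_process N g m" and m: "m > 0" and u: "\<forall>i<n. u i < u (Suc i)" and u0: "u 0 \<ge> 0" and n: "n \<ge> 1"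
  shows "distr N (PB n) (\<lambda>\<omega>. \<lambda>i\<in>{..<n}. g (u (Suc i)) \<omega> - g (u i) \<omega>) = mu (\<lambda>i. if i < n then m * (u (Suc i) - u i) else 1) n"
proof -
  interpret prob_space N by (rule gp_prob[OF gp])
  have ui: "u i \<ge> 0" if "i \<le> n" for i using incr_mono[OF u, of 0 i] that u0 by auto
  have I: "indep_vars (\<lambda>_. borel) (\<lambda>i \<omega>. g (u (Suc i)) \<omega> - g (u i) \<omega>) {..<n}"
    using gp_indep[OF gp _ u] u0 by simp
  have rv: "random_variable borel (\<lambda>\<omega>. g (u (Suc i)) \<omega> - g (u i) \<omega>)" if "i \<in> {..<n}" for i
    using that ui[of i] ui[of "Suc i"] gp_meas[OF gp] by auto
  have "distr N (PB n) (\<lambda>\<omega>. \<lambda>i\<in>{..<n}. g (u (Suc i)) \<omega> - g (u i) \<omega>) = PiM {..<n} (\<lambda>i. distr N borel (\<lambda>\<omega>. g (u (Suc i)) \<omega> - g (u i) \<omega>))"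
    using indep_vars_iff_distr_eq_PiM'[where I="{..<n}" and M'="\<lambda>_. borel" and X="\<lambda>i \<omega>. g (u (Suc i)) \<omega> - g (u i) \<omega>"] I rv n
    by (auto simp: lessThan_empty_iff)
  also have "\<dots> = mu (\<lambda>i. if i < n then m * (u (Suc i) - u i) else 1) n"
    by (rule PiM_cong) (use ui u gp_distr[OF gp] in auto)
  finally show ?thesis .
qed

lemma grid_A_indep:
  assumes gp: "gamma_process N g m" and u: "\<forall>i<n. u i < u (Suc i)" and u0: "u 0 = s" and s: "s > 0"
  shows "indep_rv N borel (g s) (PB n) (\<lambda>\<omega>. \<lambda>i\<in>{..<n}. g (u (Suc i)) \<omega> - g (u i) \<omega>)"
proof -
  interpret prob_space N by (rule gp_prob[OF gp])
  define ts where "ts = (\<lambda>i. if i = 0 then 0 else u (i - 1))"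
  have ts: "\<forall>i<Suc n. ts i < ts (Suc i)"
  proof (intro allI impI)
    fix i assume i: "i < Suc n"
    show "ts i < ts (Suc i)"
    proof (cases i)
      case (Suc k)
      then show ?thesis using u i by (simp add: ts_def)
    qed (use u0 s in \<open>simp add: ts_def\<close>)
  qed
  define X where "X = (\<lambda>i \<omega>. g (ts (Suc i)) \<omega> - g (ts i) \<omega>)"
  have I: "indep_vars (\<lambda>_. borel) X {..<Suc n}"
    unfolding X_def by (rule gp_indep[OF gp _ ts]) (simp add: ts_def)
  have IV: "indep_var (PiM {0} (\<lambda>_. borel)) (\<lambda>\<omega>. restrict (\<lambda>i. X i \<omega>) {0})
      (PiM {Suc 0..<Suc n} (\<lambda>_. borel)) (\<lambda>\<omega>. restrict (\<lambda>i. X i \<omega>) {Suc 0..<Suc n})"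
    by (rule indep_var_restrict[OF I]) auto
  have IR: "indep_rv N (PiM {0} (\<lambda>_. borel)) (\<lambda>\<omega>. restrict (\<lambda>i. X i \<omega>) {0})
      (PiM {Suc 0..<Suc n} (\<lambda>_. borel)) (\<lambda>\<omega>. restrict (\<lambda>i. X i \<omega>) {Suc 0..<Suc n})"
    by (rule indep_var_imp_rv[OF prob_space_axioms IV])
  have f1: "(\<lambda>v. v 0) \<in> measurable (PiM {0::nat} (\<lambda>_. borel)) (borel :: real measure)" by simp
  have f2: "(\<lambda>v. \<lambda>i\<in>{..<n}. v (Suc i)) \<in> measurable (PiM {Suc 0..<Suc n} (\<lambda>_. borel)) (PB n)"
    by (rule measurable_restrict) auto
  have IR2: "indep_rv N borel (\<lambda>\<omega>. restrict (\<lambda>i. X i \<omega>) {0} 0) (PB n) (\<lambda>\<omega>. \<lambda>i\<in>{..<n}. restrict (\<lambda>i. X i \<omega>) {Suc 0..<Suc n} (Suc i))"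
    by (rule indep_rv_compose[OF IR f1 f2 prob_space_axioms])
  show ?thesis
  proof (rule indep_rv_cong[OF IR2])
    fix \<omega> assume "\<omega> \<in> space N"
    then show "restrict (\<lambda>i. X i \<omega>) {0} 0 = g s \<omega>"
      using gp_zero[OF gp] u0 by (simp add: X_def ts_def)
    show "(\<lambda>i\<in>{..<n}. restrict (\<lambda>i. X i \<omega>) {Suc 0..<Suc n} (Suc i)) = (\<lambda>i\<in>{..<n}. g (u (Suc i)) \<omega> - g (u i) \<omega>)"
      by (auto simp: X_def ts_def fun_eq_iff)
  qed
qed

lemma distr_id_sets: "sets M = sets N \<Longrightarrow> distr M N (\<lambda>x. x) = M"
proof -
  assume "sets M = sets N"
  then have "distr M N (\<lambda>x. x) = distr M M (\<lambda>x. x)" by (intro distr_cong) auto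
  then show ?thesis by simp
qed

lemma grid_core:
  assumes gp: "gamma_process N g m" and m: "m > 0" and u: "\<forall>i<n. u i < u (Suc i)" and u0: "u 0 = s" and s: "s > 0" and n: "n \<ge> 1"
  defines "Yv \<equiv> (\<lambda>\<omega>. \<lambda>i\<in>{..<n}. g (u (Suc i)) \<omega> - g (u i) \<omega>)"
  shows "indep_rv N (PB n) (\<lambda>\<omega>. Qv n (Yv \<omega>)) (borel \<Otimes>\<^sub>M borel) (\<lambda>\<omega>. (g s \<omega>, Sg n (Yv \<omega>)))"
proof -
  interpret NP: prob_space N by (rule gp_prob[OF gp])
  define a where "a = (\<lambda>i. if i < n then m * (u (Suc i) - u i) else 1)"
  have a: "\<forall>i. a i > 0" using m u by (auto simp: a_def)
  obtain \<nu> where nu: "prob_space \<nu>" "sets \<nu> = sets (PB n)"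
    "distr (mu a n) (PB n \<Otimes>\<^sub>M borel) (\<lambda>y. (Qv n y, Sg n y)) = \<nu> \<Otimes>\<^sub>M Gam (\<Sum>i<n. a i)"
    using core[OF a n] by blast
  have Apos: "(\<Sum>i<n. a i) > 0" using a n by (intro sum_pos) (auto simp: lessThan_empty_iff)
  interpret PN: prob_space \<nu> by (rule nu)
  interpret GA: prob_space "Gam (\<Sum>i<n. a i)" by (rule prob_space_Gam[OF Apos])
  interpret Mu: prob_space "mu a n" by (rule prob_space_PiM) (use a prob_space_Gam in auto)
  have gsm[measurable]: "g s \<in> borel_measurable N" using gp_meas[OF gp] s by auto
  have ui: "u i \<ge> 0" if "i \<le> n" for i using incr_mono[OF u, of 0 i] that u0 s by auto
  have Yvm[measurable]: "Yv \<in> measurable N (PB n)"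
    unfolding Yv_def by (rule measurable_restrict) (use gp_meas[OF gp] ui in auto)
  define LA where "LA = distr N borel (g s)"
  interpret LA: prob_space LA unfolding LA_def by (rule NP.prob_space_distr) simp
  have law: "distr N (borel \<Otimes>\<^sub>M PB n) (\<lambda>\<omega>. (g s \<omega>, Yv \<omega>)) = LA \<Otimes>\<^sub>M mu a n"
  proof -
    have "indep_rv N borel (g s) (PB n) Yv"
      unfolding Yv_def by (rule grid_A_indep[OF gp u u0 s])
    then have "distr N borel (g s) \<Otimes>\<^sub>M distr N (PB n) Yv = distr N (borel \<Otimes>\<^sub>M PB n) (\<lambda>x. (g s x, Yv x))"
      by (simp add: indep_rv_iff[OF NP.prob_space_axioms])
    moreover have "distr N (PB n) Yv = mu a n"
      unfolding Yv_def a_def by (rule grid_law[OF gp m u]) (use u0 s n in auto)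
    ultimately show ?thesis by (simp add: LA_def)
  qed
  have D1: "distr N (borel \<Otimes>\<^sub>M (PB n \<Otimes>\<^sub>M borel)) (\<lambda>\<omega>. (g s \<omega>, (Qv n (Yv \<omega>), Sg n (Yv \<omega>))))
      = LA \<Otimes>\<^sub>M (\<nu> \<Otimes>\<^sub>M Gam (\<Sum>i<n. a i))"
  proof -
    have "distr N (borel \<Otimes>\<^sub>M (PB n \<Otimes>\<^sub>M borel)) (\<lambda>\<omega>. (g s \<omega>, (Qv n (Yv \<omega>), Sg n (Yv \<omega>))))
        = distr (distr N (borel \<Otimes>\<^sub>M PB n) (\<lambda>\<omega>. (g s \<omega>, Yv \<omega>))) (borel \<Otimes>\<^sub>M (PB n \<Otimes>\<^sub>M borel)) (\<lambda>(x, y). ((\<lambda>x. x) x, (Qv n y, Sg n y)))"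
      by (subst distr_distr) (auto simp: comp_def case_prod_unfold)
    also have "\<dots> = distr (LA \<Otimes>\<^sub>M mu a n) (borel \<Otimes>\<^sub>M (PB n \<Otimes>\<^sub>M borel)) (\<lambda>(x, y). ((\<lambda>x. x) x, (Qv n y, Sg n y)))"
      by (simp only: law)
    also have "\<dots> = distr LA borel (\<lambda>x. x) \<Otimes>\<^sub>M distr (mu a n) (PB n \<Otimes>\<^sub>M borel) (\<lambda>y. (Qv n y, Sg n y))"
      by (rule pair_measure_distr[symmetric]) (auto simp: measurable_cong_sets[OF sets_mu refl] nu(3) LA_def intro!: measurable_ident_sets prob_space_imp_sigma_finite prob_space_pair nu(1) GA.prob_space_axioms)
    also have "\<dots> = LA \<Otimes>\<^sub>M (\<nu> \<Otimes>\<^sub>M Gam (\<Sum>i<n. a i))"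
      using nu(3) by (simp add: distr_id_sets LA_def)
    finally show ?thesis .
  qed
  have D2: "distr N (PB n \<Otimes>\<^sub>M (borel \<Otimes>\<^sub>M borel)) (\<lambda>\<omega>. (Qv n (Yv \<omega>), (g s \<omega>, Sg n (Yv \<omega>))))
      = \<nu> \<Otimes>\<^sub>M (LA \<Otimes>\<^sub>M Gam (\<Sum>i<n. a i))"
  proof -
    have "distr N (PB n \<Otimes>\<^sub>M (borel \<Otimes>\<^sub>M borel)) (\<lambda>\<omega>. (Qv n (Yv \<omega>), (g s \<omega>, Sg n (Yv \<omega>))))
       = distr (distr N (borel \<Otimes>\<^sub>M (PB n \<Otimes>\<^sub>M borel)) (\<lambda>\<omega>. (g s \<omega>, (Qv n (Yv \<omega>), Sg n (Yv \<omega>))))) (PB n \<Otimes>\<^sub>M (borel \<Otimes>\<^sub>M borel)) (\<lambda>(x, (y, z)). (y, (x, z)))"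
      by (subst distr_distr) (auto simp: comp_def case_prod_unfold)
    also have "\<dots> = distr (LA \<Otimes>\<^sub>M (\<nu> \<Otimes>\<^sub>M Gam (\<Sum>i<n. a i))) (PB n \<Otimes>\<^sub>M (borel \<Otimes>\<^sub>M borel)) (\<lambda>(x, (y, z)). (y, (x, z)))"
      by (simp only: D1)
    also have "\<dots> = distr (LA \<Otimes>\<^sub>M (\<nu> \<Otimes>\<^sub>M Gam (\<Sum>i<n. a i))) (\<nu> \<Otimes>\<^sub>M (LA \<Otimes>\<^sub>M Gam (\<Sum>i<n. a i))) (\<lambda>(x, (y, z)). (y, (x, z)))"
      by (rule distr_cong) (auto simp: nu(2) LA_def intro!: sets_pair_measure_cong)
    also have "\<dots> = \<nu> \<Otimes>\<^sub>M (LA \<Otimes>\<^sub>M Gam (\<Sum>i<n. a i))"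
      by (rule pair_swap12) (rule LA.prob_space_axioms nu(1) GA.prob_space_axioms)+
    finally show ?thesis .
  qed
  show ?thesis
  proof (rule indep_rv_of_product[OF NP.prob_space_axioms _ _ nu(1) _ nu(2) _ D2])
    show "(\<lambda>\<omega>. Qv n (Yv \<omega>)) \<in> measurable N (PB n)" by simp
    show "(\<lambda>\<omega>. (g s \<omega>, Sg n (Yv \<omega>))) \<in> measurable N (borel \<Otimes>\<^sub>M borel)" by simp
    interpret LG: pair_prob_space LA "Gam (\<Sum>i<n. a i)" ..
    show "prob_space (LA \<Otimes>\<^sub>M Gam (\<Sum>i<n. a i))" by unfold_locales
    show "sets (LA \<Otimes>\<^sub>M Gam (\<Sum>i<n. a i)) = sets (borel \<Otimes>\<^sub>M borel)"
      by (intro sets_pair_measure_cong) (auto simp: LA_def)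
  qed
qed



lemma cyl_indep:
  assumes gp: "gamma_process N g m" and m: "m > 0" and s: "0 < s" and sT: "s < T"
    and J: "finite J" "J \<subseteq> {s..T}"
  shows "indep_rv N (PiM J (\<lambda>_. borel)) (\<lambda>\<omega>. \<lambda>j\<in>J. (g j \<omega> - g s \<omega>) / (g T \<omega> - g s \<omega>)) borel (\<lambda>\<omega>. g s \<omega> / g T \<omega>)"
proof -
  interpret NP: prob_space N by (rule gp_prob[OF gp])
  define K where "K = insert s (insert T J)"
  have K: "finite K" "K \<subseteq> {s..T}" "s \<in> K" "T \<in> K" using J sT by (auto simp: K_def)
  define xs where "xs = sorted_list_of_set K"
  have xs: "sorted_wrt (<) xs" "set xs = K" "distinct xs"
    using K(1) by (auto simp: xs_def strict_sorted_list_of_set)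
  define n where "n = length xs - 1"
  have "card K \<ge> 2"
  proof -
    have "{s, T} \<subseteq> K" using K by auto
    from card_mono[OF K(1) this] show ?thesis using sT by simp
  qed
  then have len: "length xs = Suc n" "n \<ge> 1"
    using distinct_card[OF xs(3)] xs(2) by (auto simp: n_def)
  define u where "u = (\<lambda>k. xs ! k)"
  have uK: "u k \<in> K" if "k \<le> n" for k using that len xs(2) by (auto simp: u_def)
  have u: "\<forall>i<n. u i < u (Suc i)"
    using sorted_wrt_nth_less[OF xs(1)] len by (auto simp: u_def)
  have uless: "u i < u j" if "i < j" "j \<le> n" for i j
    using sorted_wrt_nth_less[OF xs(1) that(1)] that len by (auto simp: u_def)
  have idx: "\<exists>k\<le>n. u k = x" if "x \<in> K" for x
  proof -
    from that xs(2) obtain k where "k < length xs" "xs ! k = x" by (auto simp: in_set_conv_nth)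
    then show ?thesis using len by (intro exI[of _ k]) (auto simp: u_def)
  qed
  have u0: "u 0 = s"
  proof -
    obtain k where k: "k \<le> n" "u k = s" using idx[OF K(3)] by blast
    show ?thesis
    proof (cases k)
      case (Suc k')
      then have "u 0 < u k" using uless k by auto
      moreover have "u 0 \<ge> s" using uK[of 0] K(2) by auto
      ultimately show ?thesis using k by auto
    qed (use k in auto)
  qed
  have un: "u n = T"
  proof -
    obtain k where k: "k \<le> n" "u k = T" using idx[OF K(4)] by blast
    show ?thesis
    proof (cases "k = n")
      case False
      then have "u k < u n" using uless k by auto
      moreover have "u n \<le> T" using uK[of n] K(2) by auto
      ultimately show ?thesis using k by auto
    qed (use k in auto)
  qed
  define kk where "kk = (\<lambda>j. SOME k. k \<le> n \<and> u k = j)"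
  have kk: "kk j \<le> n" "u (kk j) = j" if "j \<in> J" for j
  proof -
    have "\<exists>k. k \<le> n \<and> u k = j" using idx[of j] that by (auto simp: K_def)
    from someI_ex[OF this] show "kk j \<le> n" "u (kk j) = j" by (auto simp: kk_def)
  qed
  define Yv where "Yv = (\<lambda>\<omega>. \<lambda>i\<in>{..<n}. g (u (Suc i)) \<omega> - g (u i) \<omega>)"
  have core: "indep_rv N (PB n) (\<lambda>\<omega>. Qv n (Yv \<omega>)) (borel \<Otimes>\<^sub>M borel) (\<lambda>\<omega>. (g s \<omega>, Sg n (Yv \<omega>)))"
    unfolding Yv_def by (rule grid_core[OF gp m u u0 s len(2)])
  define f1 where "f1 = (\<lambda>q::nat\<Rightarrow>real. \<lambda>j\<in>J. \<Sum>i<kk j. q i)"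
  define f2 where "f2 = (\<lambda>p::real\<times>real. fst p / (fst p + snd p))"
  have f1m: "f1 \<in> measurable (PB n) (PiM J (\<lambda>_. borel))"
    unfolding f1_def
  proof (rule measurable_restrict)
    fix j assume "j \<in> J"
    then have "kk j \<le> n" by (rule kk)
    then show "(\<lambda>q::nat\<Rightarrow>real. \<Sum>i<kk j. q i) \<in> borel_measurable (PB n)"
      by (intro borel_measurable_sum) auto
  qed
  have f2m: "f2 \<in> borel_measurable (borel \<Otimes>\<^sub>M borel)" unfolding f2_def by measurable
  have I2: "indep_rv N (PiM J (\<lambda>_. borel)) (\<lambda>\<omega>. f1 (Qv n (Yv \<omega>))) borel (\<lambda>\<omega>. f2 (g s \<omega>, Sg n (Yv \<omega>)))"
    by (rule indep_rv_compose[OF core f1m f2m NP.prob_space_axioms])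
  show ?thesis
  proof (rule indep_rv_cong[OF I2])
    fix \<omega> assume \<omega>: "\<omega> \<in> space N"
    have tel: "(\<Sum>i<k. g (u (Suc i)) \<omega> - g (u i) \<omega>) = g (u k) \<omega> - g (u 0) \<omega>" for k
      by (rule sum_lessThan_telescope[where f="\<lambda>k. g (u k) \<omega>"])
    have S: "Sg n (Yv \<omega>) = g T \<omega> - g s \<omega>"
      unfolding Sg_def Yv_def using tel[of n] un u0 by simp
    have Qi: "Qv n (Yv \<omega>) i = (g (u (Suc i)) \<omega> - g (u i) \<omega>) / (g T \<omega> - g s \<omega>)" if "i < n" for i
      using that unfolding Qv_def S by (simp add: Yv_def)
    show "f2 (g s \<omega>, Sg n (Yv \<omega>)) = g s \<omega> / g T \<omega>"
      unfolding f2_def S by simp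
    show "f1 (Qv n (Yv \<omega>)) = (\<lambda>j\<in>J. (g j \<omega> - g s \<omega>) / (g T \<omega> - g s \<omega>))"
    proof (rule ext)
      fix j
      show "f1 (Qv n (Yv \<omega>)) j = (\<lambda>j\<in>J. (g j \<omega> - g s \<omega>) / (g T \<omega> - g s \<omega>)) j"
      proof (cases "j \<in> J")
        case True
        have "(\<Sum>i<kk j. Qv n (Yv \<omega>) i) = (\<Sum>i<kk j. (g (u (Suc i)) \<omega> - g (u i) \<omega>) / (g T \<omega> - g s \<omega>))"
          using kk(1)[OF True] by (intro sum.cong) (auto simp: Qi)
        also have "\<dots> = (g j \<omega> - g s \<omega>) / (g T \<omega> - g s \<omega>)"
          unfolding sum_divide_distrib[symmetric] tel kk(2)[OF True] u0 ..
        finally show ?thesis using True by (simp add: f1_def)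
      qed (simp add: f1_def)
    qed
  qed
qed

lemma N_indep:
  assumes gp: "gamma_process N g m" and m: "m > 0" and s: "0 \<le> s" and sT: "s < T"
  shows "indep_rv N (PiM {s..T} (\<lambda>_. borel)) (\<lambda>\<omega>. \<lambda>t\<in>{s..T}. (g t \<omega> - g s \<omega>) / (g T \<omega> - g s \<omega>)) borel (\<lambda>\<omega>. g s \<omega> / g T \<omega>)"
proof -
  interpret NP: prob_space N by (rule gp_prob[OF gp])
  define Rp where "Rp = (\<lambda>\<omega>. \<lambda>t\<in>{s..T}. (g t \<omega> - g s \<omega>) / (g T \<omega> - g s \<omega>))"
  define ga where "ga = (\<lambda>\<omega>. g s \<omega> / g T \<omega>)"
  have gm: "g t \<in> borel_measurable N" if "t \<ge> s" for t using gp_meas[OF gp] that s by auto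
  have Rpm: "Rp \<in> measurable N (PiM {s..T} (\<lambda>_. borel))"
    unfolding Rp_def by (rule measurable_restrict) (use gm sT in auto)
  have gam: "ga \<in> borel_measurable N" unfolding ga_def using gm[of s] gm[of T] sT by auto
  show ?thesis
  proof (cases "s = 0")
    case True
    show ?thesis unfolding Rp_def[symmetric] ga_def[symmetric]
      by (rule indep_rv_const[OF NP.prob_space_axioms Rpm gam, of 0]) (simp add: ga_def True gp_zero[OF gp])
  next
    case False
    then have s0: "s > 0" using s by auto
    define G0 where "G0 = {Rp -` E \<inter> space N |E. E \<in> prod_algebra {s..T} (\<lambda>_. (borel :: real measure))}"
    define B0 where "B0 = {ga -` C \<inter> space N |C. C \<in> sets (borel :: real measure)}"
    have PA: "prod_algebra {s..T} (\<lambda>_. (borel :: real measure)) \<subseteq> sets (PiM {s..T} (\<lambda>_. borel))"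
      by (simp add: sets_PiM sigma_sets.Basic subsetI)
    have I0: "NP.indep_set G0 B0"
    proof (rule NP.indep_setI)
      show "G0 \<subseteq> NP.events" unfolding G0_def using PA Rpm by auto
      show "B0 \<subseteq> NP.events" unfolding B0_def using gam by auto
      fix a b assume a: "a \<in> G0" and b: "b \<in> B0"
      from a obtain E where aE: "a = Rp -` E \<inter> space N" and E: "E \<in> prod_algebra {s..T} (\<lambda>_. borel)"
        unfolding G0_def by auto
      from b obtain C where bC: "b = ga -` C \<inter> space N" and C: "C \<in> sets borel"
        unfolding B0_def by auto
      from E obtain J F where EJ: "E = prod_emb {s..T} (\<lambda>_. borel) J (\<Pi>\<^sub>E j\<in>J. F j)"
        and J: "finite J" "J \<subseteq> {s..T}" and F: "\<And>j. j \<in> J \<Longrightarrow> F j \<in> sets borel"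
        by (rule prod_algebraE) auto
      have CI: "indep_rv N (PiM J (\<lambda>_. borel)) (\<lambda>\<omega>. \<lambda>j\<in>J. (g j \<omega> - g s \<omega>) / (g T \<omega> - g s \<omega>)) borel ga"
        unfolding ga_def by (rule cyl_indep[OF gp m s0 sT J])
      have a': "a = (\<lambda>\<omega>. \<lambda>j\<in>J. (g j \<omega> - g s \<omega>) / (g T \<omega> - g s \<omega>)) -` (\<Pi>\<^sub>E j\<in>J. F j) \<inter> space N"
      proof (intro set_eqI)
        fix \<omega>
        have r: "restrict (Rp \<omega>) J = (\<lambda>j\<in>J. (g j \<omega> - g s \<omega>) / (g T \<omega> - g s \<omega>))"
          using J(2) by (auto simp: Rp_def fun_eq_iff)
        have sp: "Rp \<omega> \<in> space (PiM {s..T} (\<lambda>_. (borel :: real measure)))"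
          by (simp add: Rp_def space_PiM)
        show "\<omega> \<in> a \<longleftrightarrow> \<omega> \<in> (\<lambda>\<omega>. \<lambda>j\<in>J. (g j \<omega> - g s \<omega>) / (g T \<omega> - g s \<omega>)) -` (\<Pi>\<^sub>E j\<in>J. F j) \<inter> space N"
          unfolding aE EJ prod_emb_def using sp r by (auto simp: Rp_def)
      qed
      have "(\<Pi>\<^sub>E j\<in>J. F j) \<in> sets (PiM J (\<lambda>_. borel))" using J F by (intro sets_PiM_I_finite) auto
      then show "NP.prob (a \<inter> b) = NP.prob a * NP.prob b"
        using CI unfolding indep_rv_def a' bC
        by (intro NP.indep_setD[of "{(\<lambda>\<omega>. \<lambda>j\<in>J. (g j \<omega> - g s \<omega>) / (g T \<omega> - g s \<omega>)) -` S \<inter> space N |S. S \<in> sets (PiM J (\<lambda>_. borel))}"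
               "{ga -` S \<inter> space N |S. S \<in> sets borel}"]) (use C in auto)
    qed
    have S1: "Int_stable G0"
    proof (rule Int_stableI)
      fix a b assume "a \<in> G0" "b \<in> G0"
      then obtain E1 E2 where "a = Rp -` E1 \<inter> space N" "b = Rp -` E2 \<inter> space N"
        "E1 \<in> prod_algebra {s..T} (\<lambda>_. borel)" "E2 \<in> prod_algebra {s..T} (\<lambda>_. borel)"
        unfolding G0_def by auto
      moreover have "E1 \<inter> E2 \<in> prod_algebra {s..T} (\<lambda>_. borel)"
        using Int_stable_prod_algebra calculation(3,4) by (auto simp: Int_stable_def)
      ultimately show "a \<inter> b \<in> G0" unfolding G0_def by (intro CollectI exI[of _ "E1 \<inter> E2"]) auto
    qed
    have S2: "Int_stable B0"
    proof (rule Int_stableI)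
      fix a b assume "a \<in> B0" "b \<in> B0"
      then obtain E1 E2 where "a = ga -` E1 \<inter> space N" "b = ga -` E2 \<inter> space N"
        "E1 \<in> sets borel" "E2 \<in> sets borel"
        unfolding B0_def by auto
      moreover have "E1 \<inter> E2 \<in> sets borel" using calculation(3,4) by auto
      ultimately show "a \<inter> b \<in> B0" unfolding B0_def by (intro CollectI exI[of _ "E1 \<inter> E2"]) auto
    qed
    have I1: "NP.indep_set (sigma_sets (space N) G0) (sigma_sets (space N) B0)"
      by (rule NP.indep_set_sigma_sets[OF I0 S1 S2])
    have eqG: "sigma_sets (space N) G0 = {Rp -` E \<inter> space N |E. E \<in> sets (PiM {s..T} (\<lambda>_. borel))}"
    proof -
      have "Rp \<in> space N \<rightarrow> space (PiM {s..T} (\<lambda>_. (borel :: real measure)))"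
        using Rpm by (auto dest: measurable_space)
      from sigma_sets_vimage_commute[OF this, of "prod_algebra {s..T} (\<lambda>_. borel)"]
      show ?thesis unfolding G0_def by (simp add: sets_PiM space_PiM)
    qed
    have "NP.indep_set {Rp -` E \<inter> space N |E. E \<in> sets (PiM {s..T} (\<lambda>_. borel))} {ga -` C \<inter> space N |C. C \<in> sets borel}"
      using I1 unfolding NP.indep_set_def eqG[symmetric]
      by (rule NP.indep_sets_mono_sets) (auto split: bool.split simp: B0_def intro: sigma_sets.Basic)
    then show ?thesis unfolding indep_rv_def Rp_def[symmetric] ga_def[symmetric] using Rpm gam by auto
  qed
qed



lemma gp_AE_pos:
  assumes gp: "gamma_process N g m" and m: "m > 0" and a: "0 \<le> a" and ab: "a < b"
  shows "AE \<omega> in N. g b \<omega> - g a \<omega> > 0"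
proof -
  have D: "(\<lambda>\<omega>. g b \<omega> - g a \<omega>) \<in> borel_measurable N"
    using gp_meas[OF gp] a ab by auto
  have "AE x in distr N borel (\<lambda>\<omega>. g b \<omega> - g a \<omega>). x > 0"
    by (subst gp_distr[OF gp a ab]) (rule AE_Gam_pos)
  from AE_distrD[OF D this] show ?thesis .
qed

lemma gp_shift:
  assumes gp: "gamma_process N g m" and s: "s \<ge> 0"
  shows "gamma_process N (\<lambda>u \<omega>. g (u + s) \<omega> - g s \<omega>) m"
  unfolding gamma_process_def
proof (intro conjI allI impI ballI)
  show "prob_space N" by (rule gp_prob[OF gp])
  fix t :: real assume "0 \<le> t"
  then show "(\<lambda>\<omega>. g (t + s) \<omega> - g s \<omega>) \<in> borel_measurable N"
    using gp_meas[OF gp] s by auto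
next
  fix \<omega> assume "\<omega> \<in> space N" show "g (0 + s) \<omega> - g s \<omega> = 0" by simp
next
  fix ts :: "nat \<Rightarrow> real" and n :: nat
  assume ts: "0 \<le> ts 0 \<and> (\<forall>i<n. ts i < ts (Suc i))"
  have "prob_space.indep_vars N (\<lambda>_. borel) (\<lambda>i \<omega>. g ((\<lambda>i. ts i + s) (Suc i)) \<omega> - g ((\<lambda>i. ts i + s) i) \<omega>) {..<n}"
    by (rule gp_indep[OF gp]) (use ts s in auto)
  then show "prob_space.indep_vars N (\<lambda>_. borel) (\<lambda>i \<omega>. (g (ts (Suc i) + s) \<omega> - g s \<omega>) - (g (ts i + s) \<omega> - g s \<omega>)) {..<n}"
    by simp
next
  fix u t :: real assume ut: "0 \<le> u \<and> u < t"
  have "distributed N lborel (\<lambda>\<omega>. g (t + s) \<omega> - g (u + s) \<omega>) (\<lambda>x. ennreal (gd (m * (t - u)) x))"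
    using gp_distributed[OF gp, of "u + s" "t + s"] ut s by simp
  then show "distributed N lborel (\<lambda>\<omega>. (g (t + s) \<omega> - g s \<omega>) - (g (u + s) \<omega> - g s \<omega>))
     (\<lambda>x. ennreal (indicator {0<..} x * x powr (m * (t - u) - 1) * exp (- x) / Gamma (m * (t - u))))"
    by (simp add: gd_def)
qed

theorem lemma2:
  fixes M :: "'a measure" and gam :: "real \<Rightarrow> 'a \<Rightarrow> real" and X :: "'a \<Rightarrow> real"
    and m T s :: real
  assumes "prob_space M"
    and "m > 0"
    and "gamma_bridge M gam 0 T m"
    and "X \<in> borel_measurable M"
    and "\<forall>\<omega>\<in>space M. X \<omega> > 0"
    and "indep_rv M borel X (PiM {0..T} (\<lambda>_. borel)) (\<lambda>\<omega>. \<lambda>t\<in>{0..T}. gam t \<omega>)"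
    and "0 \<le> s" and "s < T"
  defines "\<xi> \<equiv> (\<lambda>t \<omega>. X \<omega> * gam t \<omega>)"
    and "Z \<equiv> (\<lambda>\<omega>. (1 - gam s \<omega>) * X \<omega>)"
    and "\<delta> \<equiv> (\<lambda>t \<omega>. (gam t \<omega> - gam s \<omega>) / (1 - gam s \<omega>))"
  shows "(AE \<omega> in M. \<forall>t\<in>{s..T}. \<xi> t \<omega> = \<xi> s \<omega> + Z \<omega> * \<delta> t \<omega>)
       \<and> gamma_bridge M \<delta> s T m
       \<and> indep_rv M (PiM {s..T} (\<lambda>_. borel)) (\<lambda>\<omega>. \<lambda>t\<in>{s..T}. \<delta> t \<omega>)
            borel (\<lambda>\<omega>. (\<xi> s \<omega>, Z \<omega>))"
proof -
  note M = assms(1) and m = assms(2) and GB = assms(3) and Xm = assms(4) and Xpos = assms(5)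
    and XI = assms(6) and s = assms(7) and sT = assms(8)
  interpret MP: prob_space M by (rule M)
  have gamm: "gam t \<in> borel_measurable M" if "t \<in> {0..T}" for t
    using GB that by (auto simp: gamma_bridge_def)
  obtain N :: "(real \<Rightarrow> real) measure" and g where gp: "gamma_process N g m"
    and law0: "process_law M {0..T} gam = process_law N {0..T} (\<lambda>t \<omega>. g (t - 0) \<omega> / g (T - 0) \<omega>)"
    using GB by (auto simp: gamma_bridge_def)
  interpret NP: prob_space N by (rule gp_prob[OF gp])
  define P0 where "P0 = PiM {0..T} (\<lambda>_. (borel :: real measure))"
  define Ps where "Ps = PiM {s..T} (\<lambda>_. (borel :: real measure))"
  define Gp where "Gp = (\<lambda>\<omega>. \<lambda>t\<in>{0..T}. gam t \<omega>)"
  define Gn where "Gn = (\<lambda>\<omega>. \<lambda>t\<in>{0..T}. g t \<omega> / g T \<omega>)"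
  define Dl where "Dl = (\<lambda>f::real\<Rightarrow>real. \<lambda>t\<in>{s..T}. (f t - f s) / (1 - f s))"
  define Rp where "Rp = (\<lambda>\<omega>. \<lambda>t\<in>{s..T}. (g t \<omega> - g s \<omega>) / (g T \<omega> - g s \<omega>))"
  have sI: "s \<in> {0..T}" using s sT by auto
  have gnm: "g t \<in> borel_measurable N" if "t \<ge> 0" for t using gp_meas[OF gp] that by auto
  have Gpm: "Gp \<in> measurable M P0"
    unfolding Gp_def P0_def by (rule measurable_restrict) (use gamm in auto)
  have Gnm: "Gn \<in> measurable N P0"
    unfolding Gn_def P0_def by (rule measurable_restrict) (use gnm sT in auto)
  have Dlm: "Dl \<in> measurable P0 Ps"
    unfolding Dl_def P0_def Ps_def by (rule measurable_restrict) (use sI sT in auto)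
  have Rpm: "Rp \<in> measurable N Ps"
    unfolding Rp_def Ps_def by (rule measurable_restrict) (use gnm s sT in auto)
  have LG: "distr M P0 Gp = distr N P0 Gn"
    using law0 by (simp add: process_law_def P0_def Gp_def Gn_def)
  have dproc: "(\<lambda>\<omega>. \<lambda>t\<in>{s..T}. \<delta> t \<omega>) = (\<lambda>\<omega>. Dl (Gp \<omega>))"
    using sI by (auto simp: fun_eq_iff \<delta>_def Dl_def Gp_def)
  have AEN: "AE \<omega> in N. g T \<omega> - g s \<omega> > 0" by (rule gp_AE_pos[OF gp m s sT])
  have AEN0: "AE \<omega> in N. g T \<omega> > 0"
    using gp_AE_pos[OF gp m order.refl, of T] sT s gp_zero[OF gp] by (auto elim: AE_mp)
  have DlGn: "AE \<omega> in N. Dl (Gn \<omega>) = Rp \<omega>"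
    using AEN0
  proof (rule eventually_mono)
    fix \<omega> assume "g T \<omega> > 0"
    then show "Dl (Gn \<omega>) = Rp \<omega>"
      using sI by (auto simp: fun_eq_iff Dl_def Gn_def Rp_def divide_simps)
  qed
  show ?thesis
  proof (intro conjI)
    have setm: "{f \<in> space P0. f s \<noteq> 1} \<in> sets P0"
      unfolding P0_def using sI by measurable
    have "AE \<omega> in N. Gn \<omega> s \<noteq> 1"
      using AEN
    proof (rule eventually_mono)
      fix \<omega> assume "g T \<omega> - g s \<omega> > 0"
      then show "Gn \<omega> s \<noteq> 1" using sI by (auto simp: Gn_def divide_eq_1_iff)
    qed
    then have "AE f in distr N P0 Gn. f s \<noteq> 1"
      by (subst AE_distr_iff[OF Gnm setm])
    then have "AE f in distr M P0 Gp. f s \<noteq> 1" by (simp only: LG)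
    from AE_distrD[OF Gpm this] have AE1: "AE \<omega> in M. gam s \<omega> \<noteq> 1"
      using sI by (simp add: Gp_def)
    show "AE \<omega> in M. \<forall>t\<in>{s..T}. \<xi> t \<omega> = \<xi> s \<omega> + Z \<omega> * \<delta> t \<omega>"
      using AE1
    proof (rule eventually_mono)
      fix \<omega> assume "gam s \<omega> \<noteq> 1"
      then have "1 - gam s \<omega> \<noteq> 0" by simp
      then show "\<forall>t\<in>{s..T}. \<xi> t \<omega> = \<xi> s \<omega> + Z \<omega> * \<delta> t \<omega>"
        by (auto simp: \<xi>_def Z_def \<delta>_def field_simps)
    qed
    have lawD: "distr M Ps (\<lambda>\<omega>. \<lambda>t\<in>{s..T}. \<delta> t \<omega>) = distr N Ps Rp"
    proof -
      have "distr M Ps (\<lambda>\<omega>. \<lambda>t\<in>{s..T}. \<delta> t \<omega>) = distr M Ps (Dl \<circ> Gp)"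
        by (simp add: dproc comp_def)
      also have "\<dots> = distr (distr M P0 Gp) Ps Dl"
        by (rule distr_distr[symmetric, OF Dlm Gpm])
      also have "\<dots> = distr (distr N P0 Gn) Ps Dl" by (simp only: LG)
      also have "\<dots> = distr N Ps (Dl \<circ> Gn)"
        by (rule distr_distr[OF Dlm Gnm])
      also have "\<dots> = distr N Ps Rp"
        by (rule distr_cong_AE) (use DlGn Dlm Gnm Rpm in auto)
      finally show ?thesis .
    qed
    show "gamma_bridge M \<delta> s T m"
      unfolding gamma_bridge_def
    proof (intro conjI ballI exI)
      fix t assume "t \<in> {s..T}"
      then show "\<delta> t \<in> borel_measurable M"
        unfolding \<delta>_def using gamm[of t] gamm[of s] sI s by auto
    next
      show "gamma_process N (\<lambda>u \<omega>. g (u + s) \<omega> - g s \<omega>) m" by (rule gp_shift[OF gp s])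
      have "process_law N {s..T} (\<lambda>t \<omega>. (g (t - s + s) \<omega> - g s \<omega>) / (g (T - s + s) \<omega> - g s \<omega>)) = distr N Ps Rp"
        by (simp add: process_law_def Ps_def Rp_def)
      then show "process_law M {s..T} \<delta> = process_law N {s..T} (\<lambda>t \<omega>. (g (t - s + s) \<omega> - g s \<omega>) / (g (T - s + s) \<omega> - g s \<omega>))"
        using lawD by (simp add: process_law_def Ps_def)
    qed
    define LX where "LX = distr M borel X"
    define LG where "LG = distr M P0 Gp"
    define ga where "ga = (\<lambda>\<omega>. g s \<omega> / g T \<omega>)"
    define \<rho>1 where "\<rho>1 = distr N Ps Rp"
    define \<rho>2 where "\<rho>2 = distr N borel ga"
    define \<psi> where "\<psi> = (\<lambda>p::real\<times>real. (fst p * snd p, (1 - snd p) * fst p))"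
    define Hf where "Hf = (\<lambda>f::real\<Rightarrow>real. (Dl f, f s))"
    have gam_m: "ga \<in> borel_measurable N" unfolding ga_def using gnm[of s] gnm[of T] s sT by auto
    have psim: "\<psi> \<in> measurable (borel \<Otimes>\<^sub>M borel) borel" unfolding \<psi>_def by measurable
    have Hfm: "Hf \<in> measurable P0 (Ps \<Otimes>\<^sub>M borel)"
      unfolding Hf_def using Dlm sI unfolding P0_def by measurable
    interpret LX: prob_space LX unfolding LX_def by (rule MP.prob_space_distr[OF Xm])
    interpret R1: prob_space \<rho>1 unfolding \<rho>1_def by (rule NP.prob_space_distr[OF Rpm])
    interpret R2: prob_space \<rho>2 unfolding \<rho>2_def by (rule NP.prob_space_distr[OF gam_m])
    interpret LXR2: pair_prob_space LX \<rho>2 ..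
    have sLX: "sets LX = sets borel" by (simp add: LX_def)
    have sR1: "sets \<rho>1 = sets Ps" by (simp add: \<rho>1_def)
    have sR2: "sets \<rho>2 = sets borel" by (simp add: \<rho>2_def)
    have Nind: "distr N (Ps \<Otimes>\<^sub>M borel) (\<lambda>\<omega>. (Rp \<omega>, ga \<omega>)) = \<rho>1 \<Otimes>\<^sub>M \<rho>2"
      using N_indep[OF gp m s sT] unfolding indep_rv_iff[OF NP.prob_space_axioms]
      by (simp add: \<rho>1_def \<rho>2_def Rp_def ga_def Ps_def)
    have Mind: "distr M (borel \<Otimes>\<^sub>M P0) (\<lambda>\<omega>. (X \<omega>, Gp \<omega>)) = LX \<Otimes>\<^sub>M LG"
      using XI unfolding indep_rv_iff[OF M]
      by (simp add: LX_def LG_def P0_def Gp_def)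
    have HG: "distr LG (Ps \<Otimes>\<^sub>M borel) Hf = \<rho>1 \<Otimes>\<^sub>M \<rho>2"
    proof -
      have "distr LG (Ps \<Otimes>\<^sub>M borel) Hf = distr (distr N P0 Gn) (Ps \<Otimes>\<^sub>M borel) Hf"
        by (simp only: LG_def LG)
      also have "\<dots> = distr N (Ps \<Otimes>\<^sub>M borel) (Hf \<circ> Gn)"
        by (rule distr_distr[OF Hfm Gnm])
      also have "\<dots> = distr N (Ps \<Otimes>\<^sub>M borel) (\<lambda>\<omega>. (Rp \<omega>, ga \<omega>))"
      proof (rule distr_cong_AE)
        show "AE \<omega> in N. (Hf \<circ> Gn) \<omega> = (Rp \<omega>, ga \<omega>)"
          using DlGn by eventually_elim (use sI in \<open>simp add: Hf_def Gn_def ga_def\<close>)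
      qed (use Hfm Gnm Rpm gam_m in auto)
      finally show ?thesis using Nind by simp
    qed
    have step1: "distr M (Ps \<Otimes>\<^sub>M borel) (\<lambda>\<omega>. (\<lambda>t\<in>{s..T}. \<delta> t \<omega>, (\<xi> s \<omega>, Z \<omega>)))
        = distr (LX \<Otimes>\<^sub>M LG) (Ps \<Otimes>\<^sub>M borel) (\<lambda>(x, f). (Dl f, \<psi> (x, f s)))"
    proof -
      have fm: "(\<lambda>(x, f). (Dl f, \<psi> (x, f s))) \<in> measurable (borel \<Otimes>\<^sub>M P0) (Ps \<Otimes>\<^sub>M borel)"
        using Dlm psim sI unfolding P0_def case_prod_unfold by measurable
      have "distr M (Ps \<Otimes>\<^sub>M borel) (\<lambda>\<omega>. (\<lambda>t\<in>{s..T}. \<delta> t \<omega>, (\<xi> s \<omega>, Z \<omega>)))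
          = distr M (Ps \<Otimes>\<^sub>M borel) ((\<lambda>(x, f). (Dl f, \<psi> (x, f s))) \<circ> (\<lambda>\<omega>. (X \<omega>, Gp \<omega>)))"
      proof (rule distr_cong)
        fix \<omega>
        have dp: "(\<lambda>t\<in>{s..T}. \<delta> t \<omega>) = Dl (\<lambda>t\<in>{0..T}. gam t \<omega>)"
          using sI by (auto simp: fun_eq_iff \<delta>_def Dl_def)
        show "(\<lambda>t\<in>{s..T}. \<delta> t \<omega>, \<xi> s \<omega>, Z \<omega>) = ((\<lambda>(x, f). (Dl f, \<psi> (x, f s))) \<circ> (\<lambda>\<omega>. (X \<omega>, Gp \<omega>))) \<omega>"
          using sI by (simp add: dp \<psi>_def \<xi>_def Z_def Gp_def)
      qed simp_all
      also have "\<dots> = distr (distr M (borel \<Otimes>\<^sub>M P0) (\<lambda>\<omega>. (X \<omega>, Gp \<omega>))) (Ps \<Otimes>\<^sub>M borel) (\<lambda>(x, f). (Dl f, \<psi> (x, f s)))"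
        by (rule distr_distr[symmetric, OF fm]) (use Xm Gpm in simp)
      also have "\<dots> = distr (LX \<Otimes>\<^sub>M LG) (Ps \<Otimes>\<^sub>M borel) (\<lambda>(x, f). (Dl f, \<psi> (x, f s)))"
        by (simp only: Mind)
      finally show ?thesis .
    qed
    have step2: "distr (LX \<Otimes>\<^sub>M LG) (Ps \<Otimes>\<^sub>M borel) (\<lambda>(x, f). (Dl f, \<psi> (x, f s)))
        = \<rho>1 \<Otimes>\<^sub>M distr (LX \<Otimes>\<^sub>M \<rho>2) borel \<psi>"
    proof -
      have sLG: "sets LG = sets P0" by (simp add: LG_def)
      interpret LG: prob_space LG unfolding LG_def by (rule MP.prob_space_distr[OF Gpm])
      interpret R12: pair_prob_space \<rho>1 \<rho>2 ..
      interpret R1LR2: pair_prob_space \<rho>1 "LX \<Otimes>\<^sub>M \<rho>2" ..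
      define K where "K = (\<lambda>(x::real, f::real\<Rightarrow>real). (x, Hf f))"
      define Psi where "Psi = (\<lambda>(x::real, (r::real\<Rightarrow>real, c::real)). (r, \<psi> (x, c)))"
      define sw where "sw = (\<lambda>(x::real, (r::real\<Rightarrow>real, c::real)). (r, (x, c)))"
      define Psi2 where "Psi2 = (\<lambda>(r::real\<Rightarrow>real, p::real\<times>real). (r, \<psi> p))"
      have Km: "K \<in> measurable (LX \<Otimes>\<^sub>M LG) (borel \<Otimes>\<^sub>M (Ps \<Otimes>\<^sub>M borel))"
        using Hfm unfolding K_def case_prod_unfold
        by (simp add: measurable_cong_sets[OF sets_pair_measure_cong[OF sLX sLG] refl])
      have Psim: "Psi \<in> measurable (borel \<Otimes>\<^sub>M (Ps \<Otimes>\<^sub>M borel)) (Ps \<Otimes>\<^sub>M borel)"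
        using psim unfolding Psi_def case_prod_unfold by measurable
      have swm: "sw \<in> measurable (LX \<Otimes>\<^sub>M (\<rho>1 \<Otimes>\<^sub>M \<rho>2)) (Ps \<Otimes>\<^sub>M (borel \<Otimes>\<^sub>M borel))"
        unfolding sw_def case_prod_unfold
        by (simp add: measurable_cong_sets[OF sets_pair_measure_cong[OF sLX sets_pair_measure_cong[OF sR1 sR2]] refl])
      have Psi2m: "Psi2 \<in> measurable (Ps \<Otimes>\<^sub>M (borel \<Otimes>\<^sub>M borel)) (Ps \<Otimes>\<^sub>M borel)"
        using psim unfolding Psi2_def case_prod_unfold by measurable
      have "distr (LX \<Otimes>\<^sub>M LG) (Ps \<Otimes>\<^sub>M borel) (\<lambda>(x, f). (Dl f, \<psi> (x, f s)))
          = distr (LX \<Otimes>\<^sub>M LG) (Ps \<Otimes>\<^sub>M borel) (Psi \<circ> K)"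
        by (rule distr_cong) (auto simp: Psi_def K_def Hf_def)
      also have "\<dots> = distr (distr (LX \<Otimes>\<^sub>M LG) (borel \<Otimes>\<^sub>M (Ps \<Otimes>\<^sub>M borel)) K) (Ps \<Otimes>\<^sub>M borel) Psi"
        by (rule distr_distr[symmetric, OF Psim Km])
      also have "distr (LX \<Otimes>\<^sub>M LG) (borel \<Otimes>\<^sub>M (Ps \<Otimes>\<^sub>M borel)) K = LX \<Otimes>\<^sub>M (\<rho>1 \<Otimes>\<^sub>M \<rho>2)"
      proof -
        have "LX \<Otimes>\<^sub>M (\<rho>1 \<Otimes>\<^sub>M \<rho>2) = distr LX borel (\<lambda>x. x) \<Otimes>\<^sub>M distr LG (Ps \<Otimes>\<^sub>M borel) Hf"
          by (simp add: HG distr_id_sets[OF sLX])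
        also have "\<dots> = distr (LX \<Otimes>\<^sub>M LG) (borel \<Otimes>\<^sub>M (Ps \<Otimes>\<^sub>M borel)) (\<lambda>(x, y). (x, Hf y))"
          by (rule pair_measure_distr)
             (use Hfm in \<open>auto simp: HG measurable_cong_sets[OF sLG refl] measurable_cong_sets[OF sLX refl] intro: R12.sigma_finite_measure_axioms\<close>)
        finally show ?thesis unfolding K_def by simp
      qed
      also have "distr (LX \<Otimes>\<^sub>M (\<rho>1 \<Otimes>\<^sub>M \<rho>2)) (Ps \<Otimes>\<^sub>M borel) Psi
          = distr (LX \<Otimes>\<^sub>M (\<rho>1 \<Otimes>\<^sub>M \<rho>2)) (Ps \<Otimes>\<^sub>M borel) (Psi2 \<circ> sw)"
        by (rule distr_cong) (auto simp: Psi_def Psi2_def sw_def)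
      also have "\<dots> = distr (distr (LX \<Otimes>\<^sub>M (\<rho>1 \<Otimes>\<^sub>M \<rho>2)) (Ps \<Otimes>\<^sub>M (borel \<Otimes>\<^sub>M borel)) sw) (Ps \<Otimes>\<^sub>M borel) Psi2"
        by (rule distr_distr[symmetric, OF Psi2m swm])
      also have "distr (LX \<Otimes>\<^sub>M (\<rho>1 \<Otimes>\<^sub>M \<rho>2)) (Ps \<Otimes>\<^sub>M (borel \<Otimes>\<^sub>M borel)) sw = \<rho>1 \<Otimes>\<^sub>M (LX \<Otimes>\<^sub>M \<rho>2)"
      proof -
        have "distr (LX \<Otimes>\<^sub>M (\<rho>1 \<Otimes>\<^sub>M \<rho>2)) (Ps \<Otimes>\<^sub>M (borel \<Otimes>\<^sub>M borel)) sw
            = distr (LX \<Otimes>\<^sub>M (\<rho>1 \<Otimes>\<^sub>M \<rho>2)) (\<rho>1 \<Otimes>\<^sub>M (LX \<Otimes>\<^sub>M \<rho>2)) sw"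
          by (rule distr_cong) (auto simp: sR1 sLX sR2 intro!: sets_pair_measure_cong)
        also have "\<dots> = \<rho>1 \<Otimes>\<^sub>M (LX \<Otimes>\<^sub>M \<rho>2)"
          unfolding sw_def by (rule pair_swap12) (rule LX.prob_space_axioms R1.prob_space_axioms R2.prob_space_axioms)+
        finally show ?thesis .
      qed
      also have "distr (\<rho>1 \<Otimes>\<^sub>M (LX \<Otimes>\<^sub>M \<rho>2)) (Ps \<Otimes>\<^sub>M borel) Psi2
          = distr \<rho>1 Ps (\<lambda>x. x) \<Otimes>\<^sub>M distr (LX \<Otimes>\<^sub>M \<rho>2) borel \<psi>"
        unfolding Psi2_def
        by (rule pair_measure_distr[symmetric])
           (use psim in \<open>auto simp: measurable_cong_sets[OF sets_pair_measure_cong[OF sLX sR2] refl] measurable_cong_sets[OF sR1 refl]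
                  intro!: prob_space_imp_sigma_finite LXR2.prob_space_distr\<close>)
      also have "distr \<rho>1 Ps (\<lambda>x. x) = \<rho>1" by (rule distr_id_sets[OF sR1])
      finally show ?thesis .
    qed
    show "indep_rv M (PiM {s..T} (\<lambda>_. borel)) (\<lambda>\<omega>. \<lambda>t\<in>{s..T}. \<delta> t \<omega>) borel (\<lambda>\<omega>. (\<xi> s \<omega>, Z \<omega>))"
      unfolding Ps_def[symmetric]
    proof (rule indep_rv_of_product[OF M _ _ R1.prob_space_axioms _ sR1 _ step1[unfolded step2]])
      show "(\<lambda>\<omega>. \<lambda>t\<in>{s..T}. \<delta> t \<omega>) \<in> measurable M Ps"
        unfolding dproc using Dlm Gpm by simp
      show "(\<lambda>\<omega>. (\<xi> s \<omega>, Z \<omega>)) \<in> borel_measurable M"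
        unfolding \<xi>_def Z_def using Xm gamm[OF sI] by measurable
      show "prob_space (distr (LX \<Otimes>\<^sub>M \<rho>2) borel \<psi>)"
        by (rule LXR2.prob_space_distr) (use psim in \<open>simp add: measurable_cong_sets[OF sets_pair_measure_cong[OF sLX sR2] refl]\<close>)
      show "sets (distr (LX \<Otimes>\<^sub>M \<rho>2) borel \<psi>) = sets borel" by simp
    qed
  qed
qed


end
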